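(* Assume the matrix $\mathcal H_{W,0}=\begin{pmatrix}\mathcal H_{\alpha\alpha,0}&\mathcal H_{\alpha\gamma,0}\\ \mathcal H_{\gamma\alpha,0}&\mathcal H_{\gamma\gamma,0}\end{pmatrix}$ is invertible. Under Assumptions 1 and 2, when the propensity score models $e_X(X;\alpha)$ and $e_W(X,W;\alpha,\gamma)$ are correctly specified, for every $\delta$, $$\Sigma^{\mathrm{eps}}_W(\delta)=\Sigma^{\mathrm{fps}}_W(\delta)-\mathcal D_{W1}(\delta)\mathcal H_{\alpha\alpha,0}^{-1}\mathcal D_{W1}^T(\delta)-\mathcal M(\delta),$$ where $\mathcal M(\delta)=\{\mathcal D_{W2}(\delta)-\mathcal D_{W1}(\delta)\mathcal H_{\alpha\alpha,0}^{-1}\mathcal H_{\alpha\gamma,0}\}\mathcal F^{-1}\{\mathcal D_{W2}(\delta)-\mathcal D_{W1}(\delta)\mathcal H_{\alpha\alpha,0}^{-1}\mathcal H_{\alpha\gamma,0}\}^T$ and $\mathcal F=\mathcal H_{\gamma\gamma,0}-\mathcal H_{\gamma\alpha,0}\mathcal H_{\alpha\alpha,0}^{-1}\mathcal H_{\alpha\gamma,0}$.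
   Context: Data: i.i.d. copies of $(Y,Z,X,W)$, binary $Z$, $Y=ZY_1+(1-Z)Y_0$, $\tau=E(Y_1-Y_0)$. Assumption 1: $Z\perp(Y_0,Y_1)\mid X$, $0<\Pr(Z=1\mid X)<1$. Assumption 2: $Z\perp(W,Y_0,Y_1)\mid X$. $e_0(X)=\Pr(Z=1\mid X)$. Propensity models $e_X(X;\alpha)$ and $e_W(X,W;\alpha,\gamma)$ with $e_W(X,W;\alpha,0)=e_X(X;\alpha)$; correctly specified means $e_X(X;\alpha_0)=e_0(X)=e_W(X,W;\alpha_0,\gamma_0)$ with $\gamma_0=0$. Let $S_\alpha(X,W,Z;\alpha,\gamma)$, $S_\gamma(X,W,Z;\alpha,\gamma)$ be the $\alpha$- and $\gamma$-scores of $Z\log e_W+(1-Z)\log(1-e_W)$, all evaluated at $(\alpha_0,\gamma_0)$ below, and $\mathcal H_{ab,0}=E(S_aS_b^T)$ for $a,b\in\{\alpha,\gamma\}$. Outcome working model $Q_W(X,W,z;\delta)$ and $\varphi_W(Y,X,W,Z;\alpha,\gamma,\delta)=\frac{ZY}{e_W}-\frac{(1-Z)Y}{1-e_W}-\frac{Z-e_W}{e_W}Q_W(X,W,1;\delta)+\frac{e_W-Z}{1-e_W}Q_W(X,W,0;\delta)-\tau$, $e_W=e_W(X,W;\alpha,\gamma)$. $\mathcal D_{W1}(\delta)=-E\{\partial\varphi_W(\cdot;\alpha_0,\gamma_0,\delta)/\partial\alpha^T\}$, $\mathcal D_{W2}(\delta)=-E\{\partial\varphi_W(\cdot;\alpha_0,\gamma_0,\delta)/\partial\gamma^T\}$,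 $\mathcal D_W=(\mathcal D_{W1},\mathcal D_{W2})$. $\Sigma^{\mathrm{fps}}_W(\delta)=\mathrm{var}\{\varphi_W(\cdot;\alpha_0,\gamma_0,\delta)\}$ and $\Sigma^{\mathrm{eps}}_W(\delta)=\mathrm{var}\{\varphi_W(\cdot;\alpha_0,\gamma_0,\delta)-\mathcal D_W(\delta)\mathcal H_{W,0}^{-1}(S_\alpha^T,S_\gamma^T)^T\}$ (asymptotic variances of the doubly robust estimator with known, resp. maximum-likelihood-estimated, propensity score). *)

theory Defs
  imports "HOL-Probability.Probability" "HOL-Analysis.Analysis"
begin

definition pgrad :: "(real^'n \<Rightarrow> real) \<Rightarrow> real^'n \<Rightarrow> real^'n" where
  "pgrad f a = (\<chi> i. deriv (\<lambda>t. f (a + t *\<^sub>R axis i 1)) 0)"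

definition stack :: "real^'a \<Rightarrow> real^'b \<Rightarrow> real^('a + 'b)" where
  "stack u v = (\<chi> i. case i of Inl j \<Rightarrow> u $ j | Inr k \<Rightarrow> v $ k)"

definition outer :: "real^'m \<Rightarrow> real^'n \<Rightarrow> real^'n^'m" where
  "outer u v = (\<chi> i j. u $ i * v $ j)"

definition vexp :: "'o measure \<Rightarrow> ('o \<Rightarrow> real^'n) \<Rightarrow> real^'n" where
  "vexp M f = (\<chi> i. \<integral>\<omega>. f \<omega> $ i \<partial>M)"

definition mexp :: "'o measure \<Rightarrow> ('o \<Rightarrow> real^'n^'m) \<Rightarrow> real^'n^'m" where
  "mexp M f = (\<chi> i j. \<integral>\<omega>. f \<omega> $ i $ j \<partial>M)"

definition var :: "'o measure \<Rightarrow> ('o \<Rightarrow> real) \<Rightarrow> real" where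
  "var M f = (\<integral>\<omega>. (f \<omega> - (\<integral>\<omega>'. f \<omega>' \<partial>M))\<^sup>2 \<partial>M)"

definition sqint :: "'o measure \<Rightarrow> ('o \<Rightarrow> real) \<Rightarrow> bool" where
  "sqint M f \<longleftrightarrow> f \<in> borel_measurable M \<and> integrable M (\<lambda>\<omega>. (f \<omega>)\<^sup>2)"

definition cond_indep :: "'o measure \<Rightarrow> 'o measure \<Rightarrow> 'o set set \<Rightarrow> 'o set set \<Rightarrow> bool" where
  "cond_indep M F A B \<longleftrightarrow> (\<forall>a\<in>A. \<forall>b\<in>B. AE \<omega> in M.
      real_cond_exp M F (indicator (a \<inter> b)) \<omega> =
      real_cond_exp M F (indicator a) \<omega> * real_cond_exp M F (indicator b) \<omega>)"

definition phiW :: "real \<Rightarrow> real \<Rightarrow> real \<Rightarrow> real \<Rightarrow> real \<Rightarrow> real \<Rightarrow> real" where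
  "phiW tau y z e q1 q0 =
     z * y / e - (1 - z) * y / (1 - e) - (z - e) / e * q1 + (e - z) / (1 - e) * q0 - tau"

definition loglik :: "real \<Rightarrow> real \<Rightarrow> real" where
  "loglik z e = z * ln e + (1 - z) * ln (1 - e)"

definition obsY :: "('o \<Rightarrow> real) \<Rightarrow> ('o \<Rightarrow> real) \<Rightarrow> ('o \<Rightarrow> real) \<Rightarrow> 'o \<Rightarrow> real" where
  "obsY Y0 Y1 Z \<omega> = Z \<omega> * Y1 \<omega> + (1 - Z \<omega>) * Y0 \<omega>"

definition ate :: "'o measure \<Rightarrow> ('o \<Rightarrow> real) \<Rightarrow> ('o \<Rightarrow> real) \<Rightarrow> real" where
  "ate M Y0 Y1 = (\<integral>\<omega>. Y1 \<omega> - Y0 \<omega> \<partial>M)"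

definition sigX :: "'o measure \<Rightarrow> ('o \<Rightarrow> 'x) \<Rightarrow> 'x measure \<Rightarrow> 'o measure" where
  "sigX M X MX = vimage_algebra (space M) X MX"

definition e0 :: "'o measure \<Rightarrow> ('o \<Rightarrow> 'x) \<Rightarrow> 'x measure \<Rightarrow> ('o \<Rightarrow> real) \<Rightarrow> 'o \<Rightarrow> real" where
  "e0 M X MX Z = real_cond_exp M (sigX M X MX) (indicator {\<omega> \<in> space M. Z \<omega> = 1})"

definition phiRV :: "'o measure \<Rightarrow> ('o \<Rightarrow> real) \<Rightarrow> ('o \<Rightarrow> real) \<Rightarrow> ('o \<Rightarrow> real) \<Rightarrow> ('o \<Rightarrow> 'x)
     \<Rightarrow> ('o \<Rightarrow> 'w) \<Rightarrow> ('x \<Rightarrow> 'w \<Rightarrow> real^'a \<Rightarrow> real^'g \<Rightarrow> real) \<Rightarrow> ('x \<Rightarrow> 'w \<Rightarrow> real \<Rightarrow> 'd \<Rightarrow> real)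
     \<Rightarrow> 'd \<Rightarrow> real^'a \<Rightarrow> real^'g \<Rightarrow> 'o \<Rightarrow> real" where
  "phiRV M Y0 Y1 Z X W eW QW \<delta> a g \<omega> =
     phiW (ate M Y0 Y1) (obsY Y0 Y1 Z \<omega>) (Z \<omega>) (eW (X \<omega>) (W \<omega>) a g)
          (QW (X \<omega>) (W \<omega>) 1 \<delta>) (QW (X \<omega>) (W \<omega>) 0 \<delta>)"

definition scoreA :: "('o \<Rightarrow> real) \<Rightarrow> ('o \<Rightarrow> 'x) \<Rightarrow> ('o \<Rightarrow> 'w)
     \<Rightarrow> ('x \<Rightarrow> 'w \<Rightarrow> real^'a \<Rightarrow> real^'g \<Rightarrow> real) \<Rightarrow> real^'a \<Rightarrow> 'o \<Rightarrow> real^'a" where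
  "scoreA Z X W eW \<alpha>0 \<omega> = pgrad (\<lambda>a. loglik (Z \<omega>) (eW (X \<omega>) (W \<omega>) a 0)) \<alpha>0"

definition scoreG :: "('o \<Rightarrow> real) \<Rightarrow> ('o \<Rightarrow> 'x) \<Rightarrow> ('o \<Rightarrow> 'w)
     \<Rightarrow> ('x \<Rightarrow> 'w \<Rightarrow> real^'a \<Rightarrow> real^'g \<Rightarrow> real) \<Rightarrow> real^'a \<Rightarrow> 'o \<Rightarrow> real^'g" where
  "scoreG Z X W eW \<alpha>0 \<omega> = pgrad (\<lambda>g. loglik (Z \<omega>) (eW (X \<omega>) (W \<omega>) \<alpha>0 g)) 0"

definition Hmat :: "'o measure \<Rightarrow> ('o \<Rightarrow> real^'m) \<Rightarrow> ('o \<Rightarrow> real^'n) \<Rightarrow> real^'n^'m" where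
  "Hmat M S T = mexp M (\<lambda>\<omega>. outer (S \<omega>) (T \<omega>))"

end

theory Submission
  imports Defs
begin


lemma transfer_rect:
  fixes M :: "'o measure" and MX :: "'x measure" and MW :: "'w measure"
  assumes fin: "finite_measure M"
    and mX: "X \<in> measurable M MX" and mW: "W \<in> measurable M MW"
    and mr[measurable]: "\<rho> \<in> borel_measurable M" and mp[measurable]: "\<pi> \<in> borel_measurable M"
    and nr: "AE \<omega> in M. 0 \<le> \<rho> \<omega>" and np: "AE \<omega> in M. 0 \<le> \<pi> \<omega>"
    and ir: "integrable M \<rho>" and ip: "integrable M \<pi>"
    and rect: "\<And>A B. A \<in> sets MX \<Longrightarrow> B \<in> sets MW \<Longrightarrow>
      (\<integral>\<omega>. \<rho> \<omega> * (indicator A (X \<omega>) * indicator B (W \<omega>)) \<partial>M)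
       = (\<integral>\<omega>. \<pi> \<omega> * (indicator A (X \<omega>) * indicator B (W \<omega>)) \<partial>M)"
  shows "distr (density M \<rho>) (MX \<Otimes>\<^sub>M MW) (\<lambda>\<omega>. (X \<omega>, W \<omega>))
       = distr (density M \<pi>) (MX \<Otimes>\<^sub>M MW) (\<lambda>\<omega>. (X \<omega>, W \<omega>))"
proof -
  interpret finite_measure M by (rule fin)
  have mXW[measurable]: "(\<lambda>\<omega>. (X \<omega>, W \<omega>)) \<in> measurable M (MX \<Otimes>\<^sub>M MW)"
    using mX mW by measurable
  let ?E = "{a \<times> b | a b. a \<in> sets MX \<and> b \<in> sets MW}"
  have em: "emeasure (distr (density M f) (MX \<Otimes>\<^sub>M MW) (\<lambda>\<omega>. (X \<omega>, W \<omega>))) (A \<times> B)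
      = ennreal (\<integral>\<omega>. f \<omega> * (indicator A (X \<omega>) * indicator B (W \<omega>)) \<partial>M)"
    if A: "A \<in> sets MX" and B: "B \<in> sets MW" and [measurable]: "f \<in> borel_measurable M"
      and nf: "AE \<omega> in M. 0 \<le> f \<omega>" and fi: "integrable M f" for f A B
  proof -
    have AB[measurable]: "A \<times> B \<in> sets (MX \<Otimes>\<^sub>M MW)" using A B by (rule pair_measureI)
    have "emeasure (distr (density M f) (MX \<Otimes>\<^sub>M MW) (\<lambda>\<omega>. (X \<omega>, W \<omega>))) (A \<times> B)
        = emeasure (density M f) ((\<lambda>\<omega>. (X \<omega>, W \<omega>)) -` (A \<times> B) \<inter> space M)"
      by (subst emeasure_distr) auto
    also have "\<dots> = (\<integral>\<^sup>+\<omega>. ennreal (f \<omega>) * indicator ((\<lambda>\<omega>. (X \<omega>, W \<omega>)) -` (A \<times> B) \<inter> space M) \<omega> \<partial>M)"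
      by (subst emeasure_density) (auto intro!: measurable_sets[OF mXW AB])
    also have "\<dots> = (\<integral>\<^sup>+\<omega>. ennreal (f \<omega> * (indicator A (X \<omega>) * indicator B (W \<omega>))) \<partial>M)"
      by (rule nn_integral_cong) (auto simp: indicator_def)
    also have "\<dots> = ennreal (\<integral>\<omega>. f \<omega> * (indicator A (X \<omega>) * indicator B (W \<omega>)) \<partial>M)"
    proof (rule nn_integral_eq_integral)
      show "integrable M (\<lambda>\<omega>. f \<omega> * (indicator A (X \<omega>) * indicator B (W \<omega>)))"
        by (rule Bochner_Integration.integrable_bound[OF fi]) (use mX mW A B in \<open>measurable, auto simp: indicator_def\<close>)
      show "AE \<omega> in M. 0 \<le> f \<omega> * (indicator A (X \<omega>) * indicator B (W \<omega>))"
        using nf by eventually_elim auto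
    qed
    finally show ?thesis .
  qed
  show ?thesis
  proof (rule measure_eqI_generator_eq[OF Int_stable_pair_measure_generator[of MX MW]])
    show "?E \<subseteq> Pow (space MX \<times> space MW)"
      using sets.space_closed[of MX] sets.space_closed[of MW] by auto
    show "sets (distr (density M \<rho>) (MX \<Otimes>\<^sub>M MW) (\<lambda>\<omega>. (X \<omega>, W \<omega>))) = sigma_sets (space MX \<times> space MW) ?E"
      by (simp add: sets_pair_measure)
    show "sets (distr (density M \<pi>) (MX \<Otimes>\<^sub>M MW) (\<lambda>\<omega>. (X \<omega>, W \<omega>))) = sigma_sets (space MX \<times> space MW) ?E"
      by (simp add: sets_pair_measure)
    show "range (\<lambda>i::nat. space MX \<times> space MW) \<subseteq> ?E" by auto
    show "(\<Union>i::nat. space MX \<times> space MW) = space MX \<times> space MW" by simp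
    show "emeasure (distr (density M \<rho>) (MX \<Otimes>\<^sub>M MW) (\<lambda>\<omega>. (X \<omega>, W \<omega>))) (space MX \<times> space MW) \<noteq> \<infinity>" for i :: nat
      by (subst em) (use nr ir in auto)
  next
    fix S assume "S \<in> ?E"
    then obtain A B where S: "S = A \<times> B" and A: "A \<in> sets MX" and B: "B \<in> sets MW" by auto
    show "emeasure (distr (density M \<rho>) (MX \<Otimes>\<^sub>M MW) (\<lambda>\<omega>. (X \<omega>, W \<omega>))) S
        = emeasure (distr (density M \<pi>) (MX \<Otimes>\<^sub>M MW) (\<lambda>\<omega>. (X \<omega>, W \<omega>))) S"
      unfolding S using em[OF A B mr nr ir] em[OF A B mp np ip] rect[OF A B] by simp
  qed
qed

lemma transfer_int:
  fixes M :: "'o measure" and MX :: "'x measure" and MW :: "'w measure"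
  assumes eq: "distr (density M \<rho>) (MX \<Otimes>\<^sub>M MW) (\<lambda>\<omega>. (X \<omega>, W \<omega>))
       = distr (density M \<pi>) (MX \<Otimes>\<^sub>M MW) (\<lambda>\<omega>. (X \<omega>, W \<omega>))"
    and mX: "X \<in> measurable M MX" and mW: "W \<in> measurable M MW"
    and mr[measurable]: "\<rho> \<in> borel_measurable M" and mp[measurable]: "\<pi> \<in> borel_measurable M"
    and nr: "AE \<omega> in M. 0 \<le> \<rho> \<omega>" and np: "AE \<omega> in M. 0 \<le> \<pi> \<omega>"
    and mk[measurable]: "k \<in> borel_measurable (MX \<Otimes>\<^sub>M MW)"
    and ik: "integrable M (\<lambda>\<omega>. \<rho> \<omega> * k (X \<omega>, W \<omega>))"
  shows "integrable M (\<lambda>\<omega>. \<pi> \<omega> * k (X \<omega>, W \<omega>))"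
    "(\<integral>\<omega>. \<rho> \<omega> * k (X \<omega>, W \<omega>) \<partial>M) = (\<integral>\<omega>. \<pi> \<omega> * k (X \<omega>, W \<omega>) \<partial>M)"
proof -
  have mXW[measurable]: "(\<lambda>\<omega>. (X \<omega>, W \<omega>)) \<in> measurable M (MX \<Otimes>\<^sub>M MW)"
    using mX mW by measurable
  have mXWd: "(\<lambda>\<omega>. (X \<omega>, W \<omega>)) \<in> measurable (density M f) (MX \<Otimes>\<^sub>M MW)" for f
    by simp
  have I: "integrable (distr (density M f) (MX \<Otimes>\<^sub>M MW) (\<lambda>\<omega>. (X \<omega>, W \<omega>))) k
      \<longleftrightarrow> integrable M (\<lambda>\<omega>. f \<omega> * k (X \<omega>, W \<omega>))"
    if [measurable]: "f \<in> borel_measurable M" and "AE \<omega> in M. 0 \<le> f \<omega>" for f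
    using that by (simp add: integrable_distr_eq integrable_density)
  have J: "integral\<^sup>L (distr (density M f) (MX \<Otimes>\<^sub>M MW) (\<lambda>\<omega>. (X \<omega>, W \<omega>))) k
      = (\<integral>\<omega>. f \<omega> * k (X \<omega>, W \<omega>) \<partial>M)"
    if [measurable]: "f \<in> borel_measurable M" and "AE \<omega> in M. 0 \<le> f \<omega>" for f
    using that by (simp add: integral_distr integral_density)
  show "integrable M (\<lambda>\<omega>. \<pi> \<omega> * k (X \<omega>, W \<omega>))"
    using I[OF mr nr] I[OF mp np] ik eq by simp
  show "(\<integral>\<omega>. \<rho> \<omega> * k (X \<omega>, W \<omega>) \<partial>M) = (\<integral>\<omega>. \<pi> \<omega> * k (X \<omega>, W \<omega>) \<partial>M)"
    using J[OF mr nr] J[OF mp np] eq by simp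
qed

locale cset =
  fixes M :: "'o measure" and MX :: "'x measure" and MW :: "'w measure"
    and Z :: "'o \<Rightarrow> real" and X :: "'o \<Rightarrow> 'x" and W :: "'o \<Rightarrow> 'w"
    and Y0 Y1 :: "'o \<Rightarrow> real"
  assumes prob: "prob_space M"
    and meas_X: "X \<in> measurable M MX" and meas_W: "W \<in> measurable M MW"
    and meas_Z: "Z \<in> borel_measurable M" and binary: "\<forall>\<omega>\<in>space M. Z \<omega> \<in> {0, 1}"
    and A2: "cond_indep M (sigX M X MX) (sets (vimage_algebra (space M) Z borel))
               (sets (vimage_algebra (space M) (\<lambda>\<omega>. (W \<omega>, Y0 \<omega>, Y1 \<omega>)) (MW \<Otimes>\<^sub>M borel)))"
    and overlap: "AE \<omega> in M. 0 < e0 M X MX Z \<omega> \<and> e0 M X MX Z \<omega> < 1"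
begin

interpretation P: prob_space M by (rule prob)

abbreviation "F \<equiv> sigX M X MX"
abbreviation "ee \<equiv> e0 M X MX Z"

lemma subalgF: "sigma_finite_subalgebra M F"
proof -
  have "subalgebra M F"
    unfolding subalgebra_def sigX_def
    using sets_image_in_sets[OF refl meas_X] by simp
  then have "finite_measure_subalgebra M F"
    unfolding finite_measure_subalgebra_def finite_measure_subalgebra_axioms_def
    using P.finite_measure_axioms by simp
  then show ?thesis by (rule finite_measure_subalgebra_is_sigma_finite)
qed

interpretation S: sigma_finite_subalgebra M F by (rule subalgF)

lemma X_measF: "X \<in> measurable F MX"
  unfolding sigX_def by (rule measurable_vimage_algebra1) (use measurable_space[OF meas_X] in auto)

lemma ee_meas [measurable]: "ee \<in> borel_measurable M" "ee \<in> borel_measurable F"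
  unfolding e0_def by auto

lemma ee_int: "integrable M ee"
proof -
  have "{\<omega> \<in> space M. Z \<omega> = 1} \<in> sets M" using meas_Z by measurable
  then have "integrable M (indicator {\<omega> \<in> space M. Z \<omega> = 1} :: 'o \<Rightarrow> real)"
    by (intro integrable_real_indicator) (auto simp: less_top[symmetric])
  then show ?thesis unfolding e0_def by (rule S.real_cond_exp_int)
qed

lemma Z_ind: "\<omega> \<in> space M \<Longrightarrow> Z \<omega> = indicator {\<omega> \<in> space M. Z \<omega> = 1} \<omega>"
  using binary by (auto simp: indicator_def)

lemma rect1:
  assumes A: "A \<in> sets MX" and B: "B \<in> sets MW"
  shows "(\<integral>\<omega>. Z \<omega> * (indicator A (X \<omega>) * indicator B (W \<omega>)) \<partial>M)
       = (\<integral>\<omega>. ee \<omega> * (indicator A (X \<omega>) * indicator B (W \<omega>)) \<partial>M)"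
proof -
  define a where "a = {\<omega> \<in> space M. Z \<omega> = 1}"
  define b where "b = W -` B \<inter> space M"
  have a_in: "a \<in> sets (vimage_algebra (space M) Z borel)"
  proof -
    have "Z -` {1} \<inter> space M \<in> sets (vimage_algebra (space M) Z borel)"
      by (rule in_vimage_algebra) simp
    moreover have "Z -` {1} \<inter> space M = a" unfolding a_def by auto
    ultimately show ?thesis by simp
  qed
  have b_in: "b \<in> sets (vimage_algebra (space M) (\<lambda>\<omega>. (W \<omega>, Y0 \<omega>, Y1 \<omega>)) (MW \<Otimes>\<^sub>M borel))"
  proof -
    have "(\<lambda>\<omega>. (W \<omega>, Y0 \<omega>, Y1 \<omega>)) -` (B \<times> UNIV) \<inter> space M \<in> sets (vimage_algebra (space M) (\<lambda>\<omega>. (W \<omega>, Y0 \<omega>, Y1 \<omega>)) (MW \<Otimes>\<^sub>M borel))"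
      by (rule in_vimage_algebra) (use B in auto)
    moreover have "(\<lambda>\<omega>. (W \<omega>, Y0 \<omega>, Y1 \<omega>)) -` (B \<times> UNIV) \<inter> space M = b" unfolding b_def by auto
    ultimately show ?thesis by simp
  qed
  have ae: "AE \<omega> in M. real_cond_exp M F (indicator (a \<inter> b)) \<omega> = ee \<omega> * real_cond_exp M F (indicator b) \<omega>"
    using A2 a_in b_in unfolding cond_indep_def e0_def a_def by blast
  have a_M[measurable]: "a \<in> sets M" unfolding a_def using meas_Z by measurable
  have b_M[measurable]: "b \<in> sets M" unfolding b_def using measurable_sets[OF meas_W B] .
  have XA_F[measurable]: "(\<lambda>\<omega>. indicator A (X \<omega>) :: real) \<in> borel_measurable F"
    using X_measF A by measurable
  have XA_M[measurable]: "(\<lambda>\<omega>. indicator A (X \<omega>) :: real) \<in> borel_measurable M"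
    using meas_X A by measurable
  have fin: "\<And>c. c \<in> sets M \<Longrightarrow> integrable M (indicator c :: 'o \<Rightarrow> real)"
    by (intro integrable_real_indicator) (auto simp: less_top[symmetric])
  have "(\<integral>\<omega>. Z \<omega> * (indicator A (X \<omega>) * indicator B (W \<omega>)) \<partial>M)
      = (\<integral>\<omega>. indicator A (X \<omega>) * indicator (a \<inter> b) \<omega> \<partial>M)"
  proof (rule Bochner_Integration.integral_cong[OF refl])
    fix \<omega> assume "\<omega> \<in> space M"
    then show "Z \<omega> * (indicator A (X \<omega>) * indicator B (W \<omega>)) = indicator A (X \<omega>) * indicator (a \<inter> b) \<omega>"
      using binary by (auto simp: a_def b_def indicator_def)
  qed
  also have "\<dots> = (\<integral>\<omega>. indicator A (X \<omega>) * real_cond_exp M F (indicator (a \<inter> b)) \<omega> \<partial>M)"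
  proof (rule S.real_cond_exp_intg(2)[symmetric])
    show "integrable M (\<lambda>\<omega>. indicator A (X \<omega>) * indicator (a \<inter> b) \<omega> :: real)"
      by (rule Bochner_Integration.integrable_bound[OF fin[of "a \<inter> b"]]) (measurable, auto simp: indicator_def)
  qed auto
  also have "\<dots> = (\<integral>\<omega>. (indicator A (X \<omega>) * ee \<omega>) * real_cond_exp M F (indicator b) \<omega> \<partial>M)"
    by (rule integral_cong_AE) (use ae in auto)
  also have "\<dots> = (\<integral>\<omega>. (indicator A (X \<omega>) * ee \<omega>) * indicator b \<omega> \<partial>M)"
  proof (rule S.real_cond_exp_intg(2))
    show "integrable M (\<lambda>\<omega>. (indicator A (X \<omega>) * ee \<omega>) * indicator b \<omega> :: real)"
      by (rule Bochner_Integration.integrable_bound[OF ee_int]) (measurable, auto simp: indicator_def)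
  qed auto
  also have "\<dots> = (\<integral>\<omega>. ee \<omega> * (indicator A (X \<omega>) * indicator B (W \<omega>)) \<partial>M)"
    by (rule Bochner_Integration.integral_cong[OF refl]) (auto simp: b_def indicator_def)
  finally show ?thesis .
qed


lemma rect0:
  assumes A: "A \<in> sets MX" and B: "B \<in> sets MW"
  shows "(\<integral>\<omega>. (1 - Z \<omega>) * (indicator A (X \<omega>) * indicator B (W \<omega>)) \<partial>M)
       = (\<integral>\<omega>. (1 - ee \<omega>) * (indicator A (X \<omega>) * indicator B (W \<omega>)) \<partial>M)"
proof -
  have [measurable]: "(\<lambda>\<omega>. indicator A (X \<omega>) * indicator B (W \<omega>) :: real) \<in> borel_measurable M"
    using meas_X meas_W A B by measurable
  have i1: "integrable M (\<lambda>\<omega>. indicator A (X \<omega>) * indicator B (W \<omega>) :: real)"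
    by (rule Bochner_Integration.integrable_bound[of _ "\<lambda>_. 1::real"]) (use meas_X meas_W A B in \<open>measurable, auto simp: indicator_def\<close>)
  have i2: "integrable M (\<lambda>\<omega>. Z \<omega> * (indicator A (X \<omega>) * indicator B (W \<omega>)))"
    by (rule Bochner_Integration.integrable_bound[of _ "\<lambda>_. 1::real"]) 
       (use meas_Z meas_X meas_W A B binary in \<open>measurable, auto simp: indicator_def intro!: AE_I2\<close>)
  have i3: "integrable M (\<lambda>\<omega>. ee \<omega> * (indicator A (X \<omega>) * indicator B (W \<omega>)))"
    by (rule Bochner_Integration.integrable_bound[OF ee_int]) (measurable, auto simp: indicator_def)
  have "(\<integral>\<omega>. (1 - Z \<omega>) * (indicator A (X \<omega>) * indicator B (W \<omega>)) \<partial>M)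
      = (\<integral>\<omega>. indicator A (X \<omega>) * indicator B (W \<omega>) - Z \<omega> * (indicator A (X \<omega>) * indicator B (W \<omega>)) \<partial>M)"
    by (simp add: algebra_simps)
  also have "\<dots> = (\<integral>\<omega>. indicator A (X \<omega>) * indicator B (W \<omega>) \<partial>M) - (\<integral>\<omega>. Z \<omega> * (indicator A (X \<omega>) * indicator B (W \<omega>)) \<partial>M)"
    using i1 i2 by simp
  also have "\<dots> = (\<integral>\<omega>. indicator A (X \<omega>) * indicator B (W \<omega>) \<partial>M) - (\<integral>\<omega>. ee \<omega> * (indicator A (X \<omega>) * indicator B (W \<omega>)) \<partial>M)"
    using rect1[OF A B] by simp
  also have "\<dots> = (\<integral>\<omega>. indicator A (X \<omega>) * indicator B (W \<omega>) - ee \<omega> * (indicator A (X \<omega>) * indicator B (W \<omega>)) \<partial>M)"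
    using i1 i3 by simp
  also have "\<dots> = (\<integral>\<omega>. (1 - ee \<omega>) * (indicator A (X \<omega>) * indicator B (W \<omega>)) \<partial>M)"
    by (simp add: algebra_simps)
  finally show ?thesis .
qed

lemma fin: "finite_measure M" using P.finite_measure_axioms .

lemma int_one: "integrable M (\<lambda>_. 1::real)" by simp

lemma eq1: "distr (density M Z) (MX \<Otimes>\<^sub>M MW) (\<lambda>\<omega>. (X \<omega>, W \<omega>))
       = distr (density M ee) (MX \<Otimes>\<^sub>M MW) (\<lambda>\<omega>. (X \<omega>, W \<omega>))"
proof (rule transfer_rect[OF fin meas_X meas_W meas_Z ee_meas(1)])
  show "AE \<omega> in M. 0 \<le> Z \<omega>" by (intro AE_I2) (use binary in auto)
  show "AE \<omega> in M. 0 \<le> ee \<omega>" using overlap by eventually_elim auto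
  show "integrable M Z"
    by (rule Bochner_Integration.integrable_bound[OF int_one]) (use meas_Z binary in \<open>auto intro!: AE_I2\<close>)
qed (use ee_int rect1 in auto)

lemma eq0: "distr (density M (\<lambda>\<omega>. 1 - Z \<omega>)) (MX \<Otimes>\<^sub>M MW) (\<lambda>\<omega>. (X \<omega>, W \<omega>))
       = distr (density M (\<lambda>\<omega>. 1 - ee \<omega>)) (MX \<Otimes>\<^sub>M MW) (\<lambda>\<omega>. (X \<omega>, W \<omega>))"
proof (rule transfer_rect[OF fin meas_X meas_W])
  show "AE \<omega> in M. 0 \<le> 1 - Z \<omega>" by (intro AE_I2) (use binary in auto)
  show "AE \<omega> in M. 0 \<le> 1 - ee \<omega>" using overlap by eventually_elim auto
  show "integrable M (\<lambda>\<omega>. 1 - Z \<omega>)"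
    by (rule Bochner_Integration.integrable_bound[OF int_one]) (use meas_Z binary in \<open>auto intro!: AE_I2\<close>)
  show "integrable M (\<lambda>\<omega>. 1 - ee \<omega>)" using ee_int by simp
qed (use meas_Z rect0 in auto)

lemma L1:
  assumes mk: "k \<in> borel_measurable (MX \<Otimes>\<^sub>M MW)"
    and ik: "integrable M (\<lambda>\<omega>. Z \<omega> * k (X \<omega>, W \<omega>))"
  shows "integrable M (\<lambda>\<omega>. ee \<omega> * k (X \<omega>, W \<omega>))"
    "(\<integral>\<omega>. Z \<omega> * k (X \<omega>, W \<omega>) \<partial>M) = (\<integral>\<omega>. ee \<omega> * k (X \<omega>, W \<omega>) \<partial>M)"
proof -
  have n1: "AE \<omega> in M. 0 \<le> Z \<omega>" by (intro AE_I2) (use binary in auto)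
  have n2: "AE \<omega> in M. 0 \<le> ee \<omega>" using overlap by eventually_elim auto
  show "integrable M (\<lambda>\<omega>. ee \<omega> * k (X \<omega>, W \<omega>))"
       "(\<integral>\<omega>. Z \<omega> * k (X \<omega>, W \<omega>) \<partial>M) = (\<integral>\<omega>. ee \<omega> * k (X \<omega>, W \<omega>) \<partial>M)"
    using transfer_int[OF eq1 meas_X meas_W meas_Z ee_meas(1) n1 n2 mk ik] by auto
qed

lemma L0:
  assumes mk: "k \<in> borel_measurable (MX \<Otimes>\<^sub>M MW)"
    and ik: "integrable M (\<lambda>\<omega>. (1 - Z \<omega>) * k (X \<omega>, W \<omega>))"
  shows "integrable M (\<lambda>\<omega>. (1 - ee \<omega>) * k (X \<omega>, W \<omega>))"
    "(\<integral>\<omega>. (1 - Z \<omega>) * k (X \<omega>, W \<omega>) \<partial>M) = (\<integral>\<omega>. (1 - ee \<omega>) * k (X \<omega>, W \<omega>) \<partial>M)"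
proof -
  have n1: "AE \<omega> in M. 0 \<le> 1 - Z \<omega>" by (intro AE_I2) (use binary in auto)
  have n2: "AE \<omega> in M. 0 \<le> 1 - ee \<omega>" using overlap by eventually_elim auto
  have m1: "(\<lambda>\<omega>. 1 - Z \<omega>) \<in> borel_measurable M" using meas_Z by measurable
  have m2: "(\<lambda>\<omega>. 1 - ee \<omega>) \<in> borel_measurable M" by measurable
  show "integrable M (\<lambda>\<omega>. (1 - ee \<omega>) * k (X \<omega>, W \<omega>))"
       "(\<integral>\<omega>. (1 - Z \<omega>) * k (X \<omega>, W \<omega>) \<partial>M) = (\<integral>\<omega>. (1 - ee \<omega>) * k (X \<omega>, W \<omega>) \<partial>M)"
    using transfer_int[OF eq0 meas_X meas_W m1 m2 n1 n2 mk ik] by auto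
qed

end


lemma deriv_seq:
  fixes f :: "real \<Rightarrow> real"
  assumes "DERIV f 0 :> D"
  shows "(\<lambda>n. (f (inverse (real (Suc n))) - f 0) / inverse (real (Suc n))) \<longlonglongrightarrow> D"
proof -
  have 1: "((\<lambda>h. (f (0 + h) - f 0) / h) \<longlongrightarrow> D) (at 0)" using assms by (simp add: DERIV_def)
  have 2: "filterlim (\<lambda>n. inverse (real (Suc n))) (at 0) sequentially"
    by (rule filterlim_atI[OF LIMSEQ_inverse_real_of_nat]) simp
  show ?thesis using filterlim_compose[OF 1 2] by simp
qed

lemma meas_deriv:
  fixes h :: "'x \<Rightarrow> 'w \<Rightarrow> real \<Rightarrow> real"
  assumes m: "\<And>t. (\<lambda>(x, w). h x w t) \<in> borel_measurable N"
    and d: "\<And>x w. (x, w) \<in> space N \<Longrightarrow> h x w differentiable (at 0)"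
  shows "(\<lambda>(x, w). deriv (h x w) 0) \<in> borel_measurable N"
proof (rule borel_measurable_LIMSEQ_real)
  fix p assume "p \<in> space N"
  then obtain x w where p: "p = (x, w)" "(x, w) \<in> space N" by (cases p) auto
  have "DERIV (h x w) 0 :> deriv (h x w) 0" using d[OF p(2)] DERIV_deriv_iff_real_differentiable by blast
  from deriv_seq[OF this]
  show "(\<lambda>n. (\<lambda>(x, w). (h x w (inverse (real (Suc n))) - h x w 0) / inverse (real (Suc n))) p)
        \<longlonglongrightarrow> (\<lambda>(x, w). deriv (h x w) 0) p" by (simp add: p)
next
  fix n
  show "(\<lambda>(x, w). (h x w (inverse (real (Suc n))) - h x w 0) / inverse (real (Suc n))) \<in> borel_measurable N"
    using m[of "inverse (real (Suc n))"] m[of 0] by (simp add: split_beta')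
qed

lemma pointwise_id:
  assumes z: "z = 0 \<or> z = 1" and e: "0 < e" "e < 1"
  shows "phiW tau y z e q1 q0 * ((z / e - (1 - z) / (1 - e)) * d)
      + (- (z * (y - q1) / e\<^sup>2 + (1 - z) * (y - q0) / (1 - e)\<^sup>2) * d)
      = (q1 - q0 - tau) * ((z / e - (1 - z) / (1 - e)) * d)"
proof -
  define u where "u = 1 - e"
  then have u: "e = 1 - u" by simp
  have e1: "1 - u \<noteq> 0" and e2: "u \<noteq> 0" using e u by auto
  from z show ?thesis
  proof
    assume "z = 0"
    then show ?thesis using e1 e2 unfolding phiW_def u by (simp add: field_simps power2_eq_square; simp add: algebra_simps)
  next
    assume z1: "z = 1"
    have m: "(e - 1) / (1 - e) = -1" using e by (simp add: field_simps)
    have "e \<noteq> 0" using e by simp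
    then show ?thesis using z1 m unfolding phiW_def by (simp add: field_simps power2_eq_square; simp add: algebra_simps)
  qed
qed
lemma dloglik:
  fixes h :: "real \<Rightarrow> real"
  assumes d: "h differentiable (at 0)" and e: "0 < h 0" "h 0 < 1"
  shows "deriv (\<lambda>t. loglik z (h t)) 0 = (z / h 0 - (1 - z) / (1 - h 0)) * deriv h 0"
proof -
  have D: "DERIV h 0 :> deriv h 0" using d DERIV_deriv_iff_real_differentiable by blast
  have L1: "DERIV (\<lambda>t. ln (h t)) 0 :> 1 / h 0 * deriv h 0"
    by (rule DERIV_chain2[OF DERIV_ln_divide D]) (use e in auto)
  have D2: "DERIV (\<lambda>t. 1 - h t) 0 :> - deriv h 0"
    using DERIV_diff[OF DERIV_const D, of 1] by simp
  have L2: "DERIV (\<lambda>t. ln (1 - h t)) 0 :> 1 / (1 - h 0) * (- deriv h 0)"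
    by (rule DERIV_chain2[OF DERIV_ln_divide D2]) (use e in auto)
  have "DERIV (\<lambda>t. loglik z (h t)) 0 :> z * (1 / h 0 * deriv h 0) + (1 - z) * (1 / (1 - h 0) * (- deriv h 0))"
    unfolding loglik_def by (intro DERIV_add DERIV_cmult L1 L2)
  then show ?thesis by (subst DERIV_imp_deriv) (auto simp: field_simps)
qed
lemma dphi:
  fixes h :: "real \<Rightarrow> real"
  assumes d: "h differentiable (at 0)" and e: "0 < h 0" "h 0 < 1"
  shows "deriv (\<lambda>t. phiW tau y z (h t) q1 q0) 0
     = - (z * (y - q1) / (h 0)\<^sup>2 + (1 - z) * (y - q0) / (1 - h 0)\<^sup>2) * deriv h 0"
proof -
  have D: "DERIV h 0 :> deriv h 0" using d DERIV_deriv_iff_real_differentiable by blast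
  have D2: "DERIV (\<lambda>t. 1 - h t) 0 :> 0 - deriv h 0"
    using DERIV_diff[OF DERIV_const D, of 1] by simp
  have D3: "DERIV (\<lambda>t. z - h t) 0 :> 0 - deriv h 0"
    using DERIV_diff[OF DERIV_const D, of z] by simp
  have D4: "DERIV (\<lambda>t. h t - z) 0 :> deriv h 0 - 0"
    using DERIV_diff[OF D DERIV_const, of z] by simp
  have n1: "h 0 \<noteq> 0" and n2: "1 - h 0 \<noteq> 0" using e by auto
  have T1: "DERIV (\<lambda>t. z * y / h t) 0 :> (0 * h 0 - z * y * deriv h 0) / (h 0 * h 0)"
    by (rule DERIV_divide[OF DERIV_const D n1])
  have T2: "DERIV (\<lambda>t. (1 - z) * y / (1 - h t)) 0 :> (0 * (1 - h 0) - (1 - z) * y * (0 - deriv h 0)) / ((1 - h 0) * (1 - h 0))"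
    by (rule DERIV_divide[OF DERIV_const D2 n2])
  have T3: "DERIV (\<lambda>t. (z - h t) / h t * q1) 0 :> ((0 - deriv h 0) * h 0 - (z - h 0) * deriv h 0) / (h 0 * h 0) * q1"
    by (rule DERIV_cmult_right[OF DERIV_divide[OF D3 D n1]])
  have T4: "DERIV (\<lambda>t. (h t - z) / (1 - h t) * q0) 0 :> ((deriv h 0 - 0) * (1 - h 0) - (h 0 - z) * (0 - deriv h 0)) / ((1 - h 0) * (1 - h 0)) * q0"
    by (rule DERIV_cmult_right[OF DERIV_divide[OF D4 D2 n2]])
  have A: "DERIV (\<lambda>t. phiW tau y z (h t) q1 q0) 0 :>
     (0 * h 0 - z * y * deriv h 0) / (h 0 * h 0)
     - (0 * (1 - h 0) - (1 - z) * y * (0 - deriv h 0)) / ((1 - h 0) * (1 - h 0))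
     - ((0 - deriv h 0) * h 0 - (z - h 0) * deriv h 0) / (h 0 * h 0) * q1
     + ((deriv h 0 - 0) * (1 - h 0) - (h 0 - z) * (0 - deriv h 0)) / ((1 - h 0) * (1 - h 0)) * q0 - 0"
    unfolding phiW_def
    by (intro DERIV_diff DERIV_add T1 T2 T3 T4 DERIV_const)
  have B: "(0 * h 0 - z * y * deriv h 0) / (h 0 * h 0)
     - (0 * (1 - h 0) - (1 - z) * y * (0 - deriv h 0)) / ((1 - h 0) * (1 - h 0))
     - ((0 - deriv h 0) * h 0 - (z - h 0) * deriv h 0) / (h 0 * h 0) * q1
     + ((deriv h 0 - 0) * (1 - h 0) - (h 0 - z) * (0 - deriv h 0)) / ((1 - h 0) * (1 - h 0)) * q0 - 0
     = - (z * (y - q1) / (h 0)\<^sup>2 + (1 - z) * (y - q0) / (1 - h 0)\<^sup>2) * deriv h 0"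
  proof -
    have p1: "((deriv h 0 - 0) * (1 - h 0) - (h 0 - z) * (0 - deriv h 0)) = (1 - z) * deriv h 0"
      by (simp add: algebra_simps)
    have p2: "((0 - deriv h 0) * h 0 - (z - h 0) * deriv h 0) = - z * deriv h 0"
      by (simp add: algebra_simps)
    have g: "\<And>a b d. a \<noteq> 0 \<Longrightarrow> b \<noteq> 0 \<Longrightarrow> (- (z * y * d)) / (a * a) - ((1 - z) * y * d) / (b * b)
        - (- z * d) / (a * a) * q1 + ((1 - z) * d) / (b * b) * q0
        = - (z * (y - q1) / a\<^sup>2 + (1 - z) * (y - q0) / b\<^sup>2) * d"
      by (simp add: field_simps power2_eq_square)
    show ?thesis unfolding p1 p2 using g[OF n1 n2] by simp
  qed
  show ?thesis using DERIV_imp_deriv[OF A] B by simp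
qed


lemma sum_UNIV_Plus:
  fixes g :: "('a::finite + 'b::finite) \<Rightarrow> 'c::comm_monoid_add"
  shows "sum g UNIV = (\<Sum>i\<in>UNIV. g (Inl i)) + (\<Sum>k\<in>UNIV. g (Inr k))"
  using sum.Plus[of "UNIV :: 'a set" "UNIV :: 'b set" g] by (simp add: comp_def)

lemma stack_Inl[simp]: "stack u v $ Inl i = u $ i" and stack_Inr[simp]: "stack u v $ Inr k = v $ k"
  by (simp_all add: stack_def)

lemma stack_split: "p = stack (\<chi> i. p $ Inl i) (\<chi> k. p $ Inr k)"
  by (simp add: vec_eq_iff stack_def split: sum.split)

lemma stack_eq_iff: "stack a b = stack c d \<longleftrightarrow> a = c \<and> b = d"
  by (auto simp: vec_eq_iff stack_def split: sum.split)

lemma stack_zero: "stack 0 0 = 0" by (simp add: vec_eq_iff stack_def split: sum.split)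

lemma inner_stack: "stack a b \<bullet> stack c d = a \<bullet> c + b \<bullet> d"
  by (simp add: inner_vec_def sum_UNIV_Plus)

definition "blk11 H = (\<chi> i j. H $ Inl i $ Inl j)"
definition "blk12 H = (\<chi> i j. H $ Inl i $ Inr j)"
definition "blk21 H = (\<chi> i j. H $ Inr i $ Inl j)"
definition "blk22 H = (\<chi> i j. H $ Inr i $ Inr j)"

lemma block_mult:
  fixes H :: "real^('a::finite + 'g::finite)^('a + 'g)"
  shows "H *v stack u v = stack (blk11 H *v u + blk12 H *v v) (blk21 H *v u + blk22 H *v v)"
  by (auto simp: vec_eq_iff matrix_vector_mult_def sum_UNIV_Plus blk11_def blk12_def blk21_def blk22_def
      stack_def split: sum.split)

lemma mv_neg: "(A::real^'n^'m) *v (- x) = - (A *v x)"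
  by (simp add: vec_eq_iff matrix_vector_mult_def sum_negf)

lemma mv_add: "(A::real^'n^'m) *v (x + y) = A *v x + A *v y"
  by (simp add: vec_eq_iff matrix_vector_mult_def sum.distrib algebra_simps)

lemma inv_props:
  fixes A :: "real^'n^'n"
  assumes "invertible A"
  shows "A ** matrix_inv A = mat 1" "matrix_inv A ** A = mat 1"
proof -
  from assms obtain A' where "A ** A' = mat 1 \<and> A' ** A = mat 1" unfolding invertible_def by blast
  then have "A ** matrix_inv A = mat 1 \<and> matrix_inv A ** A = mat 1"
    unfolding matrix_inv_def by (rule someI)
  then show "A ** matrix_inv A = mat 1" "matrix_inv A ** A = mat 1" by auto
qed

lemma inv_mv:
  fixes A :: "real^'n^'n"
  assumes "invertible A"
  shows "matrix_inv A *v (A *v x) = x" "A *v (matrix_inv A *v x) = x"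
  by (simp_all add: matrix_vector_mul_assoc inv_props[OF assms])

lemma sym_inv:
  fixes A :: "real^'n^'n"
  assumes "invertible A" "transpose A = A"
  shows "transpose (matrix_inv A) = matrix_inv A"
proof -
  have "transpose (matrix_inv A) ** A = mat 1"
    using inv_props(1)[OF assms(1)] assms(2) by (metis matrix_transpose_mul transpose_mat)
  then have "transpose (matrix_inv A) = transpose (matrix_inv A) ** (A ** matrix_inv A)"
    using inv_props(1)[OF assms(1)] by simp
  also have "\<dots> = matrix_inv A"
    by (simp add: matrix_mul_assoc \<open>transpose (matrix_inv A) ** A = mat 1\<close>)
  finally show ?thesis .
qed

lemma invertible_ker:
  fixes A :: "real^'n^'n"
  assumes "\<And>x. A *v x = 0 \<Longrightarrow> x = 0"
  shows "invertible A"
  using assms matrix_left_invertible_ker invertible_left_inverse by blast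


lemma blk_sym:
  fixes H :: "real^('a::finite + 'g::finite)^('a + 'g)"
  assumes "transpose H = H"
  shows "transpose (blk11 H) = blk11 H" "transpose (blk22 H) = blk22 H" "transpose (blk12 H) = blk21 H"
proof -
  have h: "H $ i $ j = H $ j $ i" for i j
  proof -
    have "transpose H $ j $ i = H $ j $ i" using assms by simp
    then show ?thesis by (simp add: transpose_def)
  qed
  show "transpose (blk11 H) = blk11 H" "transpose (blk22 H) = blk22 H" "transpose (blk12 H) = blk21 H"
    by (simp_all add: vec_eq_iff transpose_def blk11_def blk12_def blk21_def blk22_def; metis h)+
qed

lemma block_lemma:
  fixes H :: "real^('a::finite + 'g::finite)^('a + 'g)" and Da :: "real^'a" and Db :: "real^'g"
  assumes symH: "transpose H = H" and invH: "invertible H" and invA: "invertible (blk11 H)"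
  defines "Ai \<equiv> matrix_inv (blk11 H)"
  defines "F \<equiv> blk22 H - blk21 H ** Ai ** blk12 H"
  defines "R \<equiv> Db - Da v* (Ai ** blk12 H)"
  shows "invertible F"
    "stack Da Db \<bullet> (matrix_inv H *v stack Da Db) = Da \<bullet> (Ai *v Da) + R \<bullet> (matrix_inv F *v R)"
proof -
  let ?A = "blk11 H" and ?B = "blk12 H" and ?C = "blk21 H" and ?E = "blk22 H"
  have AiA: "Ai *v (?A *v x) = x" for x unfolding Ai_def by (rule inv_mv(1)[OF invA])
  have AAi: "?A *v (Ai *v x) = x" for x unfolding Ai_def by (rule inv_mv(2)[OF invA])
  have symAi: "transpose Ai = Ai" unfolding Ai_def by (rule sym_inv[OF invA blk_sym(1)[OF symH]])
  have tB: "transpose ?B = ?C" by (rule blk_sym(3)[OF symH])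
  have Fv: "F *v v = ?E *v v - ?C *v (Ai *v (?B *v v))" for v
    unfolding F_def by (simp add: matrix_vector_mult_diff_rdistrib matrix_vector_mul_assoc matrix_mul_assoc)
  show invF: "invertible F"
  proof (rule invertible_ker)
    fix v assume Fv0: "F *v v = 0"
    define u where "u = - (Ai *v (?B *v v))"
    have "H *v stack u v = stack (?A *v u + ?B *v v) (?C *v u + ?E *v v)" by (rule block_mult)
    also have "?A *v u + ?B *v v = 0" unfolding u_def by (simp add: mv_neg AAi) 
    also have "?C *v u + ?E *v v = F *v v" unfolding u_def Fv by (simp add: mv_neg)
    finally have "H *v stack u v = 0" using Fv0 stack_zero by simp
    then have "stack u v = 0" using inv_mv(1)[OF invH, of "stack u v"] by simp
    then have "stack u v = stack 0 0" by (simp add: stack_zero)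
    then show "v = 0" unfolding stack_eq_iff by simp
  qed
  define c where "c = matrix_inv H *v stack Da Db"
  define c1 where "c1 = (\<chi> i. c $ Inl i)"
  define c2 where "c2 = (\<chi> k. c $ Inr k)"
  have cs: "c = stack c1 c2" unfolding c1_def c2_def by (rule stack_split)
  have "H *v c = stack Da Db" unfolding c_def by (rule inv_mv(2)[OF invH])
  then have "stack (?A *v c1 + ?B *v c2) (?C *v c1 + ?E *v c2) = stack Da Db"
    unfolding cs block_mult .
  then have E1: "?A *v c1 + ?B *v c2 = Da" and E2: "?C *v c1 + ?E *v c2 = Db"
    unfolding stack_eq_iff by auto
  have c1e: "c1 = Ai *v (Da - ?B *v c2)"
  proof -
    have "?A *v c1 = Da - ?B *v c2" using E1 by (simp add: algebra_simps)
    then show ?thesis using AiA[of c1] by simp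
  qed
  have tr: "Da v* (Ai ** ?B) = ?C *v (Ai *v Da)"
  proof -
    have "Da v* (Ai ** ?B) = transpose (Ai ** ?B) *v Da" by simp
    also have "\<dots> = (?C ** Ai) *v Da" by (simp add: matrix_transpose_mul symAi tB)
    finally show ?thesis by (simp add: matrix_vector_mul_assoc)
  qed
  have Fc2: "F *v c2 = R"
  proof -
    have "Db = ?C *v (Ai *v (Da - ?B *v c2)) + ?E *v c2" using E2 c1e by simp
    then have "Db = ?C *v (Ai *v Da) - ?C *v (Ai *v (?B *v c2)) + ?E *v c2"
      by (simp add: matrix_vector_mult_diff_distrib)
    then show ?thesis unfolding Fv R_def tr by (simp add: algebra_simps)
  qed
  have c2e: "c2 = matrix_inv F *v R" using inv_mv(1)[OF invF, of c2] Fc2 by simp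
  have "stack Da Db \<bullet> (matrix_inv H *v stack Da Db) = Da \<bullet> c1 + Db \<bullet> c2"
    unfolding c_def[symmetric] cs inner_stack ..
  also have "Da \<bullet> c1 = Da \<bullet> (Ai *v Da) - Da \<bullet> ((Ai ** ?B) *v c2)"
    unfolding c1e by (simp add: matrix_vector_mult_diff_distrib inner_diff_right matrix_vector_mul_assoc)
  also have "Da \<bullet> ((Ai ** ?B) *v c2) = (Da v* (Ai ** ?B)) \<bullet> c2"
    by (simp add: dot_lmul_matrix)
  finally have X: "stack Da Db \<bullet> (matrix_inv H *v stack Da Db) = Da \<bullet> (Ai *v Da) - (Da v* (Ai ** ?B)) \<bullet> c2 + Db \<bullet> c2" .
  have Rc2: "R \<bullet> c2 = Db \<bullet> c2 - (Da v* (Ai ** ?B)) \<bullet> c2" unfolding R_def by (rule inner_diff_left)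
  show "stack Da Db \<bullet> (matrix_inv H *v stack Da Db) = Da \<bullet> (Ai *v Da) + R \<bullet> (matrix_inv F *v R)"
    unfolding c2e[symmetric] using X Rc2 by linarith
qed



lemma sqint_prod:
  assumes "sqint M f" "sqint M g"
  shows "integrable M (\<lambda>\<omega>. f \<omega> * g \<omega>)"
proof -
  have [measurable]: "f \<in> borel_measurable M" "g \<in> borel_measurable M"
    and i: "integrable M (\<lambda>\<omega>. (f \<omega>)\<^sup>2)" "integrable M (\<lambda>\<omega>. (g \<omega>)\<^sup>2)"
    using assms by (auto simp: sqint_def)
  show ?thesis
  proof (rule Bochner_Integration.integrable_bound[OF Bochner_Integration.integrable_add[OF i]])
    show "AE \<omega> in M. norm (f \<omega> * g \<omega>) \<le> norm ((f \<omega>)\<^sup>2 + (g \<omega>)\<^sup>2)"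
    proof (intro AE_I2)
      fix \<omega>
      have a: "2 * \<bar>f \<omega>\<bar> * \<bar>g \<omega>\<bar> \<le> \<bar>f \<omega>\<bar>\<^sup>2 + \<bar>g \<omega>\<bar>\<^sup>2" by (rule sum_squares_bound)
      have b: "0 \<le> \<bar>f \<omega>\<bar> * \<bar>g \<omega>\<bar>" by simp
      have "\<bar>f \<omega> * g \<omega>\<bar> \<le> (f \<omega>)\<^sup>2 + (g \<omega>)\<^sup>2" unfolding abs_mult using a b by (simp only: power2_abs)
      then show "norm (f \<omega> * g \<omega>) \<le> norm ((f \<omega>)\<^sup>2 + (g \<omega>)\<^sup>2)"
        by (simp add: abs_mult)
    qed
  qed measurable
qed

lemma sqint_int:
  assumes "finite_measure M" "sqint M f"
  shows "integrable M f"
proof -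
  interpret finite_measure M by fact
  have "sqint M (\<lambda>_. 1)" unfolding sqint_def by simp
  from sqint_prod[OF assms(2) this] show ?thesis by simp
qed

locale dset = cset M MX MW Z X W Y0 Y1
  for M :: "'o measure" and MX :: "'x measure" and MW :: "'w measure"
    and Z :: "'o \<Rightarrow> real" and X :: "'o \<Rightarrow> 'x" and W :: "'o \<Rightarrow> 'w"
    and Y0 Y1 :: "'o \<Rightarrow> real" +
  fixes h :: "'x \<Rightarrow> 'w \<Rightarrow> real \<Rightarrow> real"
  assumes hm: "\<And>t. (\<lambda>(x, w). h x w t) \<in> borel_measurable (MX \<Otimes>\<^sub>M MW)"
    and hd: "\<And>x w. x \<in> space MX \<Longrightarrow> w \<in> space MW \<Longrightarrow> h x w differentiable (at 0)"
    and hcorr: "AE \<omega> in M. h (X \<omega>) (W \<omega>) 0 = e0 M X MX Z \<omega>"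
begin

definition "Sj \<omega> = deriv (\<lambda>t. loglik (Z \<omega>) (h (X \<omega>) (W \<omega>) t)) 0"
definition "eb p = h (fst p) (snd p) 0"
definition "dh p = deriv (h (fst p) (snd p)) 0"

lemma eb_meas[measurable]: "eb \<in> borel_measurable (MX \<Otimes>\<^sub>M MW)"
  using hm[of 0] unfolding eb_def by (simp add: split_beta')

lemma dh_meas[measurable]: "dh \<in> borel_measurable (MX \<Otimes>\<^sub>M MW)"
  using meas_deriv[where N="MX \<Otimes>\<^sub>M MW", OF hm] hd unfolding dh_def
  by (simp add: split_beta' space_pair_measure)

lemma good: "AE \<omega> in M. \<omega> \<in> space M \<and> eb (X \<omega>, W \<omega>) = ee \<omega> \<and> 0 < ee \<omega> \<and> ee \<omega> < 1"
  using hcorr overlap AE_space unfolding eb_def by eventually_elim auto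

lemma Sj_eq:
  assumes "\<omega> \<in> space M" "0 < eb (X \<omega>, W \<omega>)" "eb (X \<omega>, W \<omega>) < 1"
  shows "Sj \<omega> = (Z \<omega> / eb (X \<omega>, W \<omega>) - (1 - Z \<omega>) / (1 - eb (X \<omega>, W \<omega>))) * dh (X \<omega>, W \<omega>)"
proof -
  have "h (X \<omega>) (W \<omega>) differentiable (at 0)"
    using hd measurable_space[OF meas_X assms(1)] measurable_space[OF meas_W assms(1)] by auto
  then show ?thesis using dloglik[of "h (X \<omega>) (W \<omega>)"] assms unfolding Sj_def eb_def dh_def by auto
qed

lemma zero_mean:
  assumes mr[measurable]: "r \<in> borel_measurable (MX \<Otimes>\<^sub>M MW)"
    and mS[measurable]: "Sj \<in> borel_measurable M"
    and ir: "integrable M (\<lambda>\<omega>. r (X \<omega>, W \<omega>) * Sj \<omega>)"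
  shows "(\<integral>\<omega>. r (X \<omega>, W \<omega>) * Sj \<omega> \<partial>M) = 0"
proof -
  have [measurable]: "X \<in> measurable M MX" "W \<in> measurable M MW" "Z \<in> borel_measurable M"
    using meas_X meas_W meas_Z by auto
  define k1 where "k1 p = r p * dh p / eb p" for p
  define k0 where "k0 p = r p * dh p / (1 - eb p)" for p
  have [measurable]: "k1 \<in> borel_measurable (MX \<Otimes>\<^sub>M MW)" "k0 \<in> borel_measurable (MX \<Otimes>\<^sub>M MW)"
    unfolding k1_def[abs_def] k0_def[abs_def] by measurable
  have i1: "integrable M (\<lambda>\<omega>. Z \<omega> * (r (X \<omega>, W \<omega>) * Sj \<omega>))"
    by (rule Bochner_Integration.integrable_bound[OF ir]) (use binary in \<open>measurable, auto intro!: AE_I2 simp: abs_mult\<close>)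
  have i0: "integrable M (\<lambda>\<omega>. (1 - Z \<omega>) * (r (X \<omega>, W \<omega>) * Sj \<omega>))"
    by (rule Bochner_Integration.integrable_bound[OF ir]) (use binary in \<open>measurable, auto intro!: AE_I2 simp: abs_mult\<close>)
  have ae1: "AE \<omega> in M. Z \<omega> * (r (X \<omega>, W \<omega>) * Sj \<omega>) = Z \<omega> * k1 (X \<omega>, W \<omega>)"
    using good
  proof eventually_elim
    case (elim \<omega>)
    then show ?case using binary Sj_eq[of \<omega>] by (auto simp: k1_def)
  qed
  have ae0: "AE \<omega> in M. (1 - Z \<omega>) * (r (X \<omega>, W \<omega>) * Sj \<omega>) = - ((1 - Z \<omega>) * k0 (X \<omega>, W \<omega>))"
    using good
  proof eventually_elim
    case (elim \<omega>)
    then show ?case using binary Sj_eq[of \<omega>] by (auto simp: k0_def)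
  qed
  have aeS: "AE \<omega> in M. r (X \<omega>, W \<omega>) * Sj \<omega> = Z \<omega> * k1 (X \<omega>, W \<omega>) - (1 - Z \<omega>) * k0 (X \<omega>, W \<omega>)"
    using good
  proof eventually_elim
    case (elim \<omega>)
    then show ?case using binary Sj_eq[of \<omega>] by (auto simp: k0_def k1_def)
  qed
  have aeE: "AE \<omega> in M. ee \<omega> * k1 (X \<omega>, W \<omega>) = (1 - ee \<omega>) * k0 (X \<omega>, W \<omega>)"
    using good
  proof eventually_elim
    case (elim \<omega>)
    then show ?case by (auto simp: k0_def k1_def)
  qed
  have j1: "integrable M (\<lambda>\<omega>. Z \<omega> * k1 (X \<omega>, W \<omega>))"
  proof -
    have "integrable M (\<lambda>\<omega>. Z \<omega> * (r (X \<omega>, W \<omega>) * Sj \<omega>)) = integrable M (\<lambda>\<omega>. Z \<omega> * k1 (X \<omega>, W \<omega>))"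
      by (rule integrable_cong_AE[OF _ _ ae1]) measurable
    with i1 show ?thesis by simp
  qed
  have j0': "integrable M (\<lambda>\<omega>. - ((1 - Z \<omega>) * k0 (X \<omega>, W \<omega>)))"
  proof -
    have "integrable M (\<lambda>\<omega>. (1 - Z \<omega>) * (r (X \<omega>, W \<omega>) * Sj \<omega>)) = integrable M (\<lambda>\<omega>. - ((1 - Z \<omega>) * k0 (X \<omega>, W \<omega>)))"
      by (rule integrable_cong_AE[OF _ _ ae0]) measurable
    with i0 show ?thesis by simp
  qed
  then have j0: "integrable M (\<lambda>\<omega>. (1 - Z \<omega>) * k0 (X \<omega>, W \<omega>))"
    using Bochner_Integration.integrable_minus[OF j0'] by simp
  have "(\<integral>\<omega>. r (X \<omega>, W \<omega>) * Sj \<omega> \<partial>M) = (\<integral>\<omega>. Z \<omega> * k1 (X \<omega>, W \<omega>) - (1 - Z \<omega>) * k0 (X \<omega>, W \<omega>) \<partial>M)"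
    by (rule integral_cong_AE) (use aeS in measurable)
  also have "\<dots> = (\<integral>\<omega>. Z \<omega> * k1 (X \<omega>, W \<omega>) \<partial>M) - (\<integral>\<omega>. (1 - Z \<omega>) * k0 (X \<omega>, W \<omega>) \<partial>M)"
    using j1 j0 by simp
  also have "\<dots> = (\<integral>\<omega>. ee \<omega> * k1 (X \<omega>, W \<omega>) \<partial>M) - (\<integral>\<omega>. (1 - ee \<omega>) * k0 (X \<omega>, W \<omega>) \<partial>M)"
    using L1(2)[OF _ j1] L0(2)[OF _ j0] by simp
  also have "\<dots> = 0"
    using integral_cong_AE[OF _ _ aeE] by simp
  finally show ?thesis .
qed


lemma cross:
  fixes tau :: real and y :: "'o \<Rightarrow> real" and q1 q0 :: "'x \<times> 'w \<Rightarrow> real"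
  assumes [measurable]: "q1 \<in> borel_measurable (MX \<Otimes>\<^sub>M MW)" "q0 \<in> borel_measurable (MX \<Otimes>\<^sub>M MW)"
    and mS[measurable]: "Sj \<in> borel_measurable M"
    and iphi: "integrable M (\<lambda>\<omega>. phiW tau (y \<omega>) (Z \<omega>) (eb (X \<omega>, W \<omega>)) (q1 (X \<omega>, W \<omega>)) (q0 (X \<omega>, W \<omega>)) * Sj \<omega>)"
    and iP: "integrable M (\<lambda>\<omega>. deriv (\<lambda>t. phiW tau (y \<omega>) (Z \<omega>) (h (X \<omega>) (W \<omega>) t) (q1 (X \<omega>, W \<omega>)) (q0 (X \<omega>, W \<omega>))) 0)"
  shows "(\<integral>\<omega>. phiW tau (y \<omega>) (Z \<omega>) (eb (X \<omega>, W \<omega>)) (q1 (X \<omega>, W \<omega>)) (q0 (X \<omega>, W \<omega>)) * Sj \<omega> \<partial>M)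
       = - (\<integral>\<omega>. deriv (\<lambda>t. phiW tau (y \<omega>) (Z \<omega>) (h (X \<omega>) (W \<omega>) t) (q1 (X \<omega>, W \<omega>)) (q0 (X \<omega>, W \<omega>))) 0 \<partial>M)"
proof -
  have [measurable]: "X \<in> measurable M MX" "W \<in> measurable M MW" "Z \<in> borel_measurable M"
    using meas_X meas_W meas_Z by auto
  define A where "A \<omega> = phiW tau (y \<omega>) (Z \<omega>) (eb (X \<omega>, W \<omega>)) (q1 (X \<omega>, W \<omega>)) (q0 (X \<omega>, W \<omega>)) * Sj \<omega>" for \<omega>
  define P where "P \<omega> = deriv (\<lambda>t. phiW tau (y \<omega>) (Z \<omega>) (h (X \<omega>) (W \<omega>) t) (q1 (X \<omega>, W \<omega>)) (q0 (X \<omega>, W \<omega>))) 0" for \<omega>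
  define r where "r p = q1 p - q0 p - tau" for p
  have [measurable]: "r \<in> borel_measurable (MX \<Otimes>\<^sub>M MW)" unfolding r_def[abs_def] by measurable
  have iA: "integrable M A" using iphi unfolding A_def .
  have iP': "integrable M P" using iP unfolding P_def .
  have [measurable]: "A \<in> borel_measurable M" "P \<in> borel_measurable M" using iA iP' by auto
  have ae: "AE \<omega> in M. r (X \<omega>, W \<omega>) * Sj \<omega> = A \<omega> + P \<omega>"
    using good
  proof eventually_elim
    case (elim \<omega>)
    then have sp: "\<omega> \<in> space M" and e: "0 < eb (X \<omega>, W \<omega>)" "eb (X \<omega>, W \<omega>) < 1" by auto
    have d: "h (X \<omega>) (W \<omega>) differentiable (at 0)"
      using hd measurable_space[OF meas_X sp] measurable_space[OF meas_W sp] by auto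
    have e': "0 < h (X \<omega>) (W \<omega>) 0" "h (X \<omega>) (W \<omega>) 0 < 1" using e unfolding eb_def by auto
    have z: "Z \<omega> = 0 \<or> Z \<omega> = 1" using binary sp by auto
    have "P \<omega> = - (Z \<omega> * (y \<omega> - q1 (X \<omega>, W \<omega>)) / (eb (X \<omega>, W \<omega>))\<^sup>2 + (1 - Z \<omega>) * (y \<omega> - q0 (X \<omega>, W \<omega>)) / (1 - eb (X \<omega>, W \<omega>))\<^sup>2) * dh (X \<omega>, W \<omega>)"
      unfolding P_def using dphi[OF d e'] unfolding eb_def dh_def by simp
    then show ?case
      unfolding A_def Sj_eq[OF sp e] r_def using pointwise_id[OF z e] by simp
  qed
  have iR: "integrable M (\<lambda>\<omega>. r (X \<omega>, W \<omega>) * Sj \<omega>)"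
  proof -
    have "integrable M (\<lambda>\<omega>. r (X \<omega>, W \<omega>) * Sj \<omega>) = integrable M (\<lambda>\<omega>. A \<omega> + P \<omega>)"
      by (rule integrable_cong_AE[OF _ _ ae]) measurable
    with iA iP' show ?thesis by simp
  qed
  have "(\<integral>\<omega>. A \<omega> \<partial>M) = (\<integral>\<omega>. r (X \<omega>, W \<omega>) * Sj \<omega> - P \<omega> \<partial>M)"
    by (rule integral_cong_AE) (use ae in \<open>measurable, auto\<close>)
  also have "\<dots> = (\<integral>\<omega>. r (X \<omega>, W \<omega>) * Sj \<omega> \<partial>M) - (\<integral>\<omega>. P \<omega> \<partial>M)"
    using iR iP' by simp
  also have "\<dots> = - (\<integral>\<omega>. P \<omega> \<partial>M)"
    using zero_mean[OF _ mS iR] by simp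
  finally show ?thesis unfolding A_def P_def .
qed

lemma mean_zero:
  assumes mS[measurable]: "Sj \<in> borel_measurable M" and iS: "integrable M Sj"
  shows "(\<integral>\<omega>. Sj \<omega> \<partial>M) = 0"
  using zero_mean[of "\<lambda>_. 1"] iS by simp


end

lemma (in cset) direction:
  fixes h :: "'x \<Rightarrow> 'w \<Rightarrow> real \<Rightarrow> real" and tau :: real and y :: "'o \<Rightarrow> real"
    and q1 q0 :: "'x \<times> 'w \<Rightarrow> real"
  assumes hm: "\<And>t. (\<lambda>(x, w). h x w t) \<in> borel_measurable (MX \<Otimes>\<^sub>M MW)"
    and hd: "\<And>x w. x \<in> space MX \<Longrightarrow> w \<in> space MW \<Longrightarrow> h x w differentiable (at 0)"
    and hcorr: "AE \<omega> in M. h (X \<omega>) (W \<omega>) 0 = e0 M X MX Z \<omega>"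
    and q1m: "q1 \<in> borel_measurable (MX \<Otimes>\<^sub>M MW)" and q0m: "q0 \<in> borel_measurable (MX \<Otimes>\<^sub>M MW)"
    and sS: "sqint M (\<lambda>\<omega>. deriv (\<lambda>t. loglik (Z \<omega>) (h (X \<omega>) (W \<omega>) t)) 0)"
    and iphi: "integrable M (\<lambda>\<omega>. phiW tau (y \<omega>) (Z \<omega>) (h (X \<omega>) (W \<omega>) 0) (q1 (X \<omega>, W \<omega>)) (q0 (X \<omega>, W \<omega>))
                 * deriv (\<lambda>t. loglik (Z \<omega>) (h (X \<omega>) (W \<omega>) t)) 0)"
    and iP: "integrable M (\<lambda>\<omega>. deriv (\<lambda>t. phiW tau (y \<omega>) (Z \<omega>) (h (X \<omega>) (W \<omega>) t) (q1 (X \<omega>, W \<omega>)) (q0 (X \<omega>, W \<omega>))) 0)"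
  shows "(\<integral>\<omega>. deriv (\<lambda>t. loglik (Z \<omega>) (h (X \<omega>) (W \<omega>) t)) 0 \<partial>M) = 0"
    "(\<integral>\<omega>. phiW tau (y \<omega>) (Z \<omega>) (h (X \<omega>) (W \<omega>) 0) (q1 (X \<omega>, W \<omega>)) (q0 (X \<omega>, W \<omega>))
                 * deriv (\<lambda>t. loglik (Z \<omega>) (h (X \<omega>) (W \<omega>) t)) 0 \<partial>M)
     = - (\<integral>\<omega>. deriv (\<lambda>t. phiW tau (y \<omega>) (Z \<omega>) (h (X \<omega>) (W \<omega>) t) (q1 (X \<omega>, W \<omega>)) (q0 (X \<omega>, W \<omega>))) 0 \<partial>M)"
proof -
  interpret D: dset M MX MW Z X W Y0 Y1 h
    by (intro dset.intro dset_axioms.intro cset_axioms hm hd hcorr)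
  have mS: "D.Sj \<in> borel_measurable M" using sS unfolding D.Sj_def[abs_def] sqint_def by simp
  have iS: "integrable M D.Sj" using sqint_int[OF fin sS] unfolding D.Sj_def[abs_def] .
  show "(\<integral>\<omega>. deriv (\<lambda>t. loglik (Z \<omega>) (h (X \<omega>) (W \<omega>) t)) 0 \<partial>M) = 0"
    using D.mean_zero[OF mS iS] unfolding D.Sj_def .
  show "(\<integral>\<omega>. phiW tau (y \<omega>) (Z \<omega>) (h (X \<omega>) (W \<omega>) 0) (q1 (X \<omega>, W \<omega>)) (q0 (X \<omega>, W \<omega>))
                 * deriv (\<lambda>t. loglik (Z \<omega>) (h (X \<omega>) (W \<omega>) t)) 0 \<partial>M)
     = - (\<integral>\<omega>. deriv (\<lambda>t. phiW tau (y \<omega>) (Z \<omega>) (h (X \<omega>) (W \<omega>) t) (q1 (X \<omega>, W \<omega>)) (q0 (X \<omega>, W \<omega>))) 0 \<partial>M)"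
    using D.cross[OF q1m q0m mS, of tau y] iphi iP unfolding D.Sj_def D.eb_def by simp
qed



lemma sqint_meas: "sqint M f \<Longrightarrow> f \<in> borel_measurable M" by (simp add: sqint_def)

lemma sqint_add:
  assumes "sqint M f" "sqint M g" shows "sqint M (\<lambda>\<omega>. f \<omega> + g \<omega>)"
proof -
  have [measurable]: "f \<in> borel_measurable M" "g \<in> borel_measurable M" using assms by (auto simp: sqint_def)
  have "integrable M (\<lambda>\<omega>. (f \<omega>)\<^sup>2 + (g \<omega>)\<^sup>2 + 2 * (f \<omega> * g \<omega>))"
    using assms sqint_prod[OF assms] by (auto simp: sqint_def)
  then have "integrable M (\<lambda>\<omega>. (f \<omega> + g \<omega>)\<^sup>2)" by (simp add: power2_sum algebra_simps)
  then show ?thesis unfolding sqint_def by simp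
qed

lemma sqint_cmult:
  assumes "sqint M f" shows "sqint M (\<lambda>\<omega>. c * f \<omega>)"
proof -
  have "integrable M (\<lambda>\<omega>. c\<^sup>2 * (f \<omega>)\<^sup>2)" using assms by (auto simp: sqint_def)
  moreover have "(\<lambda>\<omega>. c * f \<omega>) \<in> borel_measurable M"
  proof -
    have [measurable]: "f \<in> borel_measurable M" using assms by (simp add: sqint_def)
    show ?thesis by measurable
  qed
  ultimately show ?thesis unfolding sqint_def by (simp add: power_mult_distrib)
qed

lemma sqint_zero: "sqint M (\<lambda>_. 0)" by (simp add: sqint_def)

lemma sqint_sum:
  assumes "finite I" "\<And>i. i \<in> I \<Longrightarrow> sqint M (f i)"
  shows "sqint M (\<lambda>\<omega>. \<Sum>i\<in>I. f i \<omega>)"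
  using assms by (induction I rule: finite_induct) (auto simp: sqint_zero intro!: sqint_add)

lemma sqint_inner:
  fixes S :: "'o \<Rightarrow> real^'n"
  assumes "\<And>j. sqint M (\<lambda>\<omega>. S \<omega> $ j)"
  shows "sqint M (\<lambda>\<omega>. c \<bullet> S \<omega>)"
  unfolding inner_vec_def using assms by (auto intro!: sqint_sum sqint_cmult)

lemma int_inner:
  fixes S :: "'o \<Rightarrow> real^'n"
  assumes "\<And>j. sqint M (\<lambda>\<omega>. S \<omega> $ j)" "sqint M g"
  shows "(\<integral>\<omega>. g \<omega> * (c \<bullet> S \<omega>) \<partial>M) = (\<Sum>j\<in>UNIV. c $ j * (\<integral>\<omega>. g \<omega> * S \<omega> $ j \<partial>M))"
proof -
  have "(\<integral>\<omega>. g \<omega> * (c \<bullet> S \<omega>) \<partial>M) = (\<integral>\<omega>. (\<Sum>j\<in>UNIV. c $ j * (g \<omega> * S \<omega> $ j)) \<partial>M)"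
    unfolding inner_vec_def by (simp add: sum_distrib_left algebra_simps)
  also have "\<dots> = (\<Sum>j\<in>UNIV. (\<integral>\<omega>. c $ j * (g \<omega> * S \<omega> $ j) \<partial>M))"
    by (rule Bochner_Integration.integral_sum) (use sqint_prod[OF assms(2) assms(1)] in auto)
  also have "\<dots> = (\<Sum>j\<in>UNIV. c $ j * (\<integral>\<omega>. g \<omega> * S \<omega> $ j \<partial>M))"
    by simp
  finally show ?thesis .
qed

lemma Hmat_nth: "Hmat M S T $ i $ j = (\<integral>\<omega>. S \<omega> $ i * T \<omega> $ j \<partial>M)"
  by (simp add: Hmat_def mexp_def outer_def)

lemma G1:
  fixes S :: "'o \<Rightarrow> real^'n"
  assumes "\<And>j. sqint M (\<lambda>\<omega>. S \<omega> $ j)"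
  shows "(Hmat M S S *v v) $ j = (\<integral>\<omega>. S \<omega> $ j * (v \<bullet> S \<omega>) \<partial>M)"
  using int_inner[OF assms assms, of j v]
  by (simp add: matrix_vector_mult_def Hmat_nth mult.commute)

lemma G2:
  fixes S :: "'o \<Rightarrow> real^'n"
  assumes "\<And>j. sqint M (\<lambda>\<omega>. S \<omega> $ j)"
  shows "v \<bullet> (Hmat M S S *v v) = (\<integral>\<omega>. (v \<bullet> S \<omega>)\<^sup>2 \<partial>M)"
proof -
  have "(\<integral>\<omega>. (v \<bullet> S \<omega>)\<^sup>2 \<partial>M) = (\<integral>\<omega>. (v \<bullet> S \<omega>) * (v \<bullet> S \<omega>) \<partial>M)"
    by (simp add: power2_eq_square)
  also have "\<dots> = (\<Sum>j\<in>UNIV. v $ j * (\<integral>\<omega>. (v \<bullet> S \<omega>) * S \<omega> $ j \<partial>M))"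
    by (rule int_inner[OF assms sqint_inner[OF assms]])
  also have "\<dots> = v \<bullet> (Hmat M S S *v v)"
  proof -
    have c: "\<And>j. (\<integral>\<omega>. (v \<bullet> S \<omega>) * S \<omega> $ j \<partial>M) = (\<integral>\<omega>. S \<omega> $ j * (v \<bullet> S \<omega>) \<partial>M)"
      by (simp add: mult.commute)
    show ?thesis unfolding c inner_vec_def[of v "Hmat M S S *v v"] G1[OF assms] by simp
  qed
  finally show ?thesis by simp
qed


lemma var_lemma:
  fixes S :: "'o \<Rightarrow> real^'n" and c D :: "real^'n"
  assumes fm: "finite_measure M" and sf: "sqint M f" and sS: "\<And>j. sqint M (\<lambda>\<omega>. S \<omega> $ j)"
    and m0: "\<And>j. (\<integral>\<omega>. S \<omega> $ j \<partial>M) = 0"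
    and mD: "\<And>j. (\<integral>\<omega>. f \<omega> * S \<omega> $ j \<partial>M) = D $ j"
  shows "var M (\<lambda>\<omega>. f \<omega> - c \<bullet> S \<omega>) = var M f - 2 * (c \<bullet> D) + c \<bullet> (Hmat M S S *v c)"
proof -
  interpret finite_measure M by (rule fm)
  define m where "m = (\<integral>\<omega>. f \<omega> \<partial>M)"
  have s1: "sqint M (\<lambda>_. 1)" by (simp add: sqint_def)
  have sc: "sqint M (\<lambda>\<omega>. c \<bullet> S \<omega>)" by (rule sqint_inner[OF sS])
  have sfm: "sqint M (\<lambda>\<omega>. f \<omega> - m)"
    using sqint_add[OF sf sqint_cmult[OF s1, of "- m"]] by simp
  have if1: "integrable M f" using sqint_int[OF fm sf] .
  have ic: "integrable M (\<lambda>\<omega>. c \<bullet> S \<omega>)" using sqint_int[OF fm sc] .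
  have mc: "(\<integral>\<omega>. c \<bullet> S \<omega> \<partial>M) = 0"
    using int_inner[OF sS s1, of c] m0 by simp
  have mean: "(\<integral>\<omega>. f \<omega> - c \<bullet> S \<omega> \<partial>M) = m"
    using if1 ic mc unfolding m_def by simp
  have i1: "integrable M (\<lambda>\<omega>. (f \<omega> - m)\<^sup>2)" using sfm by (simp add: sqint_def)
  have i2: "integrable M (\<lambda>\<omega>. (f \<omega> - m) * (c \<bullet> S \<omega>))" by (rule sqint_prod[OF sfm sc])
  have i3: "integrable M (\<lambda>\<omega>. (c \<bullet> S \<omega>)\<^sup>2)" using sc by (simp add: sqint_def)
  have cross: "(\<integral>\<omega>. (f \<omega> - m) * (c \<bullet> S \<omega>) \<partial>M) = c \<bullet> D"
  proof -
    have "(\<integral>\<omega>. (f \<omega> - m) * (c \<bullet> S \<omega>) \<partial>M) = (\<Sum>j\<in>UNIV. c $ j * (\<integral>\<omega>. (f \<omega> - m) * S \<omega> $ j \<partial>M))"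
      by (rule int_inner[OF sS sfm])
    also have "\<dots> = (\<Sum>j\<in>UNIV. c $ j * D $ j)"
    proof (rule sum.cong[OF refl])
      fix j
      have "(\<integral>\<omega>. (f \<omega> - m) * S \<omega> $ j \<partial>M) = (\<integral>\<omega>. f \<omega> * S \<omega> $ j - m * S \<omega> $ j \<partial>M)"
        by (simp add: algebra_simps)
      also have "\<dots> = (\<integral>\<omega>. f \<omega> * S \<omega> $ j \<partial>M) - m * (\<integral>\<omega>. S \<omega> $ j \<partial>M)"
        using sqint_prod[OF sf sS[of j]] sqint_int[OF fm sS[of j]] by simp
      also have "\<dots> = D $ j" using mD m0 by simp
      finally show "c $ j * (\<integral>\<omega>. (f \<omega> - m) * S \<omega> $ j \<partial>M) = c $ j * D $ j" by simp
    qed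
    also have "\<dots> = c \<bullet> D" by (simp add: inner_vec_def)
    finally show ?thesis .
  qed
  have "var M (\<lambda>\<omega>. f \<omega> - c \<bullet> S \<omega>) = (\<integral>\<omega>. (f \<omega> - c \<bullet> S \<omega> - m)\<^sup>2 \<partial>M)"
    unfolding var_def mean ..
  also have "\<dots> = (\<integral>\<omega>. (f \<omega> - m)\<^sup>2 - 2 * ((f \<omega> - m) * (c \<bullet> S \<omega>)) + (c \<bullet> S \<omega>)\<^sup>2 \<partial>M)"
    by (rule Bochner_Integration.integral_cong[OF refl]) (simp add: power2_eq_square algebra_simps)
  also have "\<dots> = (\<integral>\<omega>. (f \<omega> - m)\<^sup>2 \<partial>M) - 2 * (\<integral>\<omega>. (f \<omega> - m) * (c \<bullet> S \<omega>) \<partial>M) + (\<integral>\<omega>. (c \<bullet> S \<omega>)\<^sup>2 \<partial>M)"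
    using i1 i2 i3 by simp
  also have "\<dots> = var M f - 2 * (c \<bullet> D) + c \<bullet> (Hmat M S S *v c)"
    using cross unfolding G2[OF sS] var_def m_def by simp
  finally show ?thesis .
qed



theorem lemmaS5:
  fixes M :: "'o measure" and MX :: "'x measure" and MW :: "'w measure"
    and Y0 Y1 Z :: "'o \<Rightarrow> real" and X :: "'o \<Rightarrow> 'x" and W :: "'o \<Rightarrow> 'w"
    and eX :: "'x \<Rightarrow> real^'a \<Rightarrow> real"
    and eW :: "'x \<Rightarrow> 'w \<Rightarrow> real^'a \<Rightarrow> real^'g \<Rightarrow> real"
    and QW :: "'x \<Rightarrow> 'w \<Rightarrow> real \<Rightarrow> 'd \<Rightarrow> real"
    and \<alpha>0 :: "real^'a" and \<delta> :: 'd
  assumes prob: "prob_space M"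
    and meas_X: "X \<in> measurable M MX" and meas_W: "W \<in> measurable M MW"
    and meas_Z: "Z \<in> borel_measurable M" and binary: "\<forall>\<omega>\<in>space M. Z \<omega> \<in> {0, 1}"
    and sq_Y0: "sqint M Y0" and sq_Y1: "sqint M Y1"
    and meas_eX: "\<And>a. (\<lambda>x. eX x a) \<in> borel_measurable MX"
    and meas_eW: "\<And>a g. (\<lambda>(x, w). eW x w a g) \<in> borel_measurable (MX \<Otimes>\<^sub>M MW)"
    and meas_QW: "\<And>z. (\<lambda>(x, w). QW x w z \<delta>) \<in> borel_measurable (MX \<Otimes>\<^sub>M MW)"
    and nested: "\<And>x w a. eW x w a 0 = eX x a"
    \<comment> \<open>Assumption 1\<close>
    and A1_indep: "cond_indep M (sigX M X MX) (sets (vimage_algebra (space M) Z borel))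
                     (sets (vimage_algebra (space M) (\<lambda>\<omega>. (Y0 \<omega>, Y1 \<omega>)) borel))"
    and A1_overlap: "AE \<omega> in M. 0 < e0 M X MX Z \<omega> \<and> e0 M X MX Z \<omega> < 1"
    \<comment> \<open>Assumption 2\<close>
    and A2: "cond_indep M (sigX M X MX) (sets (vimage_algebra (space M) Z borel))
               (sets (vimage_algebra (space M) (\<lambda>\<omega>. (W \<omega>, Y0 \<omega>, Y1 \<omega>)) (MW \<Otimes>\<^sub>M borel)))"
    \<comment> \<open>correct specification of both propensity score models (gamma0 = 0)\<close>
    and correct: "AE \<omega> in M. eX (X \<omega>) \<alpha>0 = e0 M X MX Z \<omega>"
    \<comment> \<open>regularity: coordinatewise differentiability of e_W at (alpha0, 0)\<close>
    and diff_a: "\<And>x w i. x \<in> space MX \<Longrightarrow> w \<in> space MW \<Longrightarrow>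
                   (\<lambda>t. eW x w (\<alpha>0 + t *\<^sub>R axis i 1) 0) differentiable (at 0)"
    and diff_g: "\<And>x w k. x \<in> space MX \<Longrightarrow> w \<in> space MW \<Longrightarrow>
                   (\<lambda>t. eW x w \<alpha>0 (0 + t *\<^sub>R axis k 1)) differentiable (at 0)"
    \<comment> \<open>regularity: finite moments\<close>
    and sq_Q1: "sqint M (\<lambda>\<omega>. QW (X \<omega>) (W \<omega>) 1 \<delta>)"
    and sq_Q0: "sqint M (\<lambda>\<omega>. QW (X \<omega>) (W \<omega>) 0 \<delta>)"
    and sq_phi: "sqint M (phiRV M Y0 Y1 Z X W eW QW \<delta> \<alpha>0 0)"
    and sq_Sa: "\<And>i. sqint M (\<lambda>\<omega>. scoreA Z X W eW \<alpha>0 \<omega> $ i)"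
    and sq_Sg: "\<And>k. sqint M (\<lambda>\<omega>. scoreG Z X W eW \<alpha>0 \<omega> $ k)"
    and int_Da: "\<And>i. integrable M
                   (\<lambda>\<omega>. pgrad (\<lambda>a. phiRV M Y0 Y1 Z X W eW QW \<delta> a 0 \<omega>) \<alpha>0 $ i)"
    and int_Dg: "\<And>k. integrable M
                   (\<lambda>\<omega>. pgrad (\<lambda>g. phiRV M Y0 Y1 Z X W eW QW \<delta> \<alpha>0 g \<omega>) 0 $ k)"
    \<comment> \<open>the information matrix H_{W,0} is invertible\<close>
    and inv_HW: "invertible (Hmat M (\<lambda>\<omega>. stack (scoreA Z X W eW \<alpha>0 \<omega>) (scoreG Z X W eW \<alpha>0 \<omega>))
                                  (\<lambda>\<omega>. stack (scoreA Z X W eW \<alpha>0 \<omega>) (scoreG Z X W eW \<alpha>0 \<omega>)))"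
  shows
    "let Sa = scoreA Z X W eW \<alpha>0; Sg = scoreG Z X W eW \<alpha>0;
         S = (\<lambda>\<omega>. stack (Sa \<omega>) (Sg \<omega>));
         \<phi> = phiRV M Y0 Y1 Z X W eW QW \<delta>;
         Haa = Hmat M Sa Sa; Hag = Hmat M Sa Sg; Hga = Hmat M Sg Sa; Hgg = Hmat M Sg Sg;
         HW = Hmat M S S;
         D1 = - vexp M (\<lambda>\<omega>. pgrad (\<lambda>a. \<phi> a 0 \<omega>) \<alpha>0);
         D2 = - vexp M (\<lambda>\<omega>. pgrad (\<lambda>g. \<phi> \<alpha>0 g \<omega>) 0);
         DW = stack D1 D2;
         \<Sigma>fps = var M (\<phi> \<alpha>0 0);
         \<Sigma>eps = var M (\<lambda>\<omega>. \<phi> \<alpha>0 0 \<omega> - DW \<bullet> (matrix_inv HW *v S \<omega>));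
         F = Hgg - Hga ** matrix_inv Haa ** Hag;
         R = D2 - D1 v* (matrix_inv Haa ** Hag);
         MM = R \<bullet> (matrix_inv F *v R)
     in \<Sigma>eps = \<Sigma>fps - D1 \<bullet> (matrix_inv Haa *v D1) - MM"
proof -
  have cs: "cset M MX MW Z X W Y0 Y1"
    by (rule cset.intro) (rule prob meas_X meas_W meas_Z binary A2 A1_overlap)+
  interpret C: cset M MX MW Z X W Y0 Y1 by (rule cs)
  have fin: "finite_measure M" by (rule C.fin)
  define Sa where "Sa = scoreA Z X W eW \<alpha>0"
  define Sg where "Sg = scoreG Z X W eW \<alpha>0"
  define S where "S = (\<lambda>\<omega>. stack (Sa \<omega>) (Sg \<omega>))"
  define \<phi> where "\<phi> = phiRV M Y0 Y1 Z X W eW QW \<delta>"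
  define D1 where "D1 = - vexp M (\<lambda>\<omega>. pgrad (\<lambda>a. \<phi> a 0 \<omega>) \<alpha>0)"
  define D2 where "D2 = - vexp M (\<lambda>\<omega>. pgrad (\<lambda>g. \<phi> \<alpha>0 g \<omega>) 0)"
  define HW where "HW = Hmat M S S"
  define tau where "tau = ate M Y0 Y1"
  define y where "y = obsY Y0 Y1 Z"
  define q1 where "q1 = (\<lambda>p. QW (fst p) (snd p) 1 \<delta>)"
  define q0 where "q0 = (\<lambda>p. QW (fst p) (snd p) 0 \<delta>)"
  have q1m: "q1 \<in> borel_measurable (MX \<Otimes>\<^sub>M MW)" using meas_QW[of 1] unfolding q1_def by (simp add: split_beta')
  have q0m: "q0 \<in> borel_measurable (MX \<Otimes>\<^sub>M MW)" using meas_QW[of 0] unfolding q0_def by (simp add: split_beta')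
  have corr: "AE \<omega> in M. eW (X \<omega>) (W \<omega>) \<alpha>0 0 = e0 M X MX Z \<omega>" using correct by (simp add: nested)
  have sphi: "sqint M (\<phi> \<alpha>0 0)" using sq_phi unfolding \<phi>_def .
  have phi0: "\<And>\<omega>. \<phi> \<alpha>0 0 \<omega> = phiW tau (y \<omega>) (Z \<omega>) (eW (X \<omega>) (W \<omega>) \<alpha>0 0) (q1 (X \<omega>, W \<omega>)) (q0 (X \<omega>, W \<omega>))"
    by (simp add: \<phi>_def phiRV_def tau_def y_def q1_def q0_def)
  have dirA: "(\<integral>\<omega>. Sa \<omega> $ i \<partial>M) = 0 \<and> (\<integral>\<omega>. \<phi> \<alpha>0 0 \<omega> * Sa \<omega> $ i \<partial>M) = D1 $ i" for i
  proof -
    let ?h = "\<lambda>x w t. eW x w (\<alpha>0 + t *\<^sub>R axis i 1) 0"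
    have Sai: "\<And>\<omega>. Sa \<omega> $ i = deriv (\<lambda>t. loglik (Z \<omega>) (?h (X \<omega>) (W \<omega>) t)) 0"
      by (simp add: Sa_def scoreA_def pgrad_def)
    have Pi: "\<And>\<omega>. pgrad (\<lambda>a. \<phi> a 0 \<omega>) \<alpha>0 $ i = deriv (\<lambda>t. phiW tau (y \<omega>) (Z \<omega>) (?h (X \<omega>) (W \<omega>) t) (q1 (X \<omega>, W \<omega>)) (q0 (X \<omega>, W \<omega>))) 0"
      by (simp add: pgrad_def \<phi>_def phiRV_def tau_def y_def q1_def q0_def)
    have sS: "sqint M (\<lambda>\<omega>. deriv (\<lambda>t. loglik (Z \<omega>) (?h (X \<omega>) (W \<omega>) t)) 0)"
      using sq_Sa[of i] unfolding Sa_def[symmetric] Sai .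
    have iphi: "integrable M (\<lambda>\<omega>. phiW tau (y \<omega>) (Z \<omega>) (?h (X \<omega>) (W \<omega>) 0) (q1 (X \<omega>, W \<omega>)) (q0 (X \<omega>, W \<omega>))
                 * deriv (\<lambda>t. loglik (Z \<omega>) (?h (X \<omega>) (W \<omega>) t)) 0)"
      using sqint_prod[OF sphi sS] unfolding phi0 by simp
    have iP: "integrable M (\<lambda>\<omega>. deriv (\<lambda>t. phiW tau (y \<omega>) (Z \<omega>) (?h (X \<omega>) (W \<omega>) t) (q1 (X \<omega>, W \<omega>)) (q0 (X \<omega>, W \<omega>))) 0)"
      using int_Da[of i] unfolding \<phi>_def[symmetric] Pi .
    have hm: "\<And>t. (\<lambda>(x, w). ?h x w t) \<in> borel_measurable (MX \<Otimes>\<^sub>M MW)" by (rule meas_eW)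
    have hd: "\<And>x w. x \<in> space MX \<Longrightarrow> w \<in> space MW \<Longrightarrow> ?h x w differentiable (at 0)" by (rule diff_a)
    have hc: "AE \<omega> in M. ?h (X \<omega>) (W \<omega>) 0 = e0 M X MX Z \<omega>" using corr by simp
    note R = C.direction[OF hm hd hc q1m q0m sS iphi iP]
    have "D1 $ i = - (\<integral>\<omega>. pgrad (\<lambda>a. \<phi> a 0 \<omega>) \<alpha>0 $ i \<partial>M)" by (simp add: D1_def vexp_def)
    then show ?thesis using R unfolding Sai Pi phi0 by simp
  qed
  have dirG: "(\<integral>\<omega>. Sg \<omega> $ k \<partial>M) = 0 \<and> (\<integral>\<omega>. \<phi> \<alpha>0 0 \<omega> * Sg \<omega> $ k \<partial>M) = D2 $ k" for k
  proof -
    let ?h = "\<lambda>x w t. eW x w \<alpha>0 (t *\<^sub>R axis k 1)"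
    have Sgk: "\<And>\<omega>. Sg \<omega> $ k = deriv (\<lambda>t. loglik (Z \<omega>) (?h (X \<omega>) (W \<omega>) t)) 0"
      by (simp add: Sg_def scoreG_def pgrad_def)
    have Pk: "\<And>\<omega>. pgrad (\<lambda>g. \<phi> \<alpha>0 g \<omega>) 0 $ k = deriv (\<lambda>t. phiW tau (y \<omega>) (Z \<omega>) (?h (X \<omega>) (W \<omega>) t) (q1 (X \<omega>, W \<omega>)) (q0 (X \<omega>, W \<omega>))) 0"
      by (simp add: pgrad_def \<phi>_def phiRV_def tau_def y_def q1_def q0_def)
    have sS: "sqint M (\<lambda>\<omega>. deriv (\<lambda>t. loglik (Z \<omega>) (?h (X \<omega>) (W \<omega>) t)) 0)"
      using sq_Sg[of k] unfolding Sg_def[symmetric] Sgk .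
    have iphi: "integrable M (\<lambda>\<omega>. phiW tau (y \<omega>) (Z \<omega>) (?h (X \<omega>) (W \<omega>) 0) (q1 (X \<omega>, W \<omega>)) (q0 (X \<omega>, W \<omega>))
                 * deriv (\<lambda>t. loglik (Z \<omega>) (?h (X \<omega>) (W \<omega>) t)) 0)"
      using sqint_prod[OF sphi sS] unfolding phi0 by simp
    have iP: "integrable M (\<lambda>\<omega>. deriv (\<lambda>t. phiW tau (y \<omega>) (Z \<omega>) (?h (X \<omega>) (W \<omega>) t) (q1 (X \<omega>, W \<omega>)) (q0 (X \<omega>, W \<omega>))) 0)"
      using int_Dg[of k] unfolding \<phi>_def[symmetric] Pk .
    have hm: "\<And>t. (\<lambda>(x, w). ?h x w t) \<in> borel_measurable (MX \<Otimes>\<^sub>M MW)" by (rule meas_eW)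
    have hd: "\<And>x w. x \<in> space MX \<Longrightarrow> w \<in> space MW \<Longrightarrow> ?h x w differentiable (at 0)"
      using diff_g by simp
    have hc: "AE \<omega> in M. ?h (X \<omega>) (W \<omega>) 0 = e0 M X MX Z \<omega>" using corr by simp
    note R = C.direction[OF hm hd hc q1m q0m sS iphi iP]
    have "D2 $ k = - (\<integral>\<omega>. pgrad (\<lambda>g. \<phi> \<alpha>0 g \<omega>) 0 $ k \<partial>M)" by (simp add: D2_def vexp_def)
    then show ?thesis using R unfolding Sgk Pk phi0 by simp
  qed
  have sS: "sqint M (\<lambda>\<omega>. S \<omega> $ j)" for j
    by (cases j) (simp_all add: S_def Sa_def Sg_def sq_Sa sq_Sg)
  have m0: "(\<integral>\<omega>. S \<omega> $ j \<partial>M) = 0" for j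
    by (cases j) (simp_all add: S_def dirA dirG)
  have mD: "(\<integral>\<omega>. \<phi> \<alpha>0 0 \<omega> * S \<omega> $ j \<partial>M) = stack D1 D2 $ j" for j
    by (cases j) (simp_all add: S_def dirA dirG)
  have symHW: "transpose HW = HW"
    by (simp add: vec_eq_iff transpose_def HW_def Hmat_nth mult.commute)
  have invHW: "invertible HW" using inv_HW unfolding HW_def S_def Sa_def Sg_def .
  define Hi where "Hi = matrix_inv HW"
  have symHi: "transpose Hi = Hi" unfolding Hi_def by (rule sym_inv[OF invHW symHW])
  define c where "c = stack D1 D2 v* Hi"
  have c_eq: "c = Hi *v stack D1 D2" unfolding c_def by (metis symHi transpose_matrix_vector)
  have Hc: "HW *v c = stack D1 D2" unfolding c_eq Hi_def by (rule inv_mv(2)[OF invHW])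
  have eps: "var M (\<lambda>\<omega>. \<phi> \<alpha>0 0 \<omega> - stack D1 D2 \<bullet> (Hi *v S \<omega>)) = var M (\<phi> \<alpha>0 0) - stack D1 D2 \<bullet> (Hi *v stack D1 D2)"
  proof -
    have "(\<lambda>\<omega>. \<phi> \<alpha>0 0 \<omega> - stack D1 D2 \<bullet> (Hi *v S \<omega>)) = (\<lambda>\<omega>. \<phi> \<alpha>0 0 \<omega> - c \<bullet> S \<omega>)"
      unfolding c_def by (simp add: dot_lmul_matrix)
    then have "var M (\<lambda>\<omega>. \<phi> \<alpha>0 0 \<omega> - stack D1 D2 \<bullet> (Hi *v S \<omega>)) = var M (\<phi> \<alpha>0 0) - 2 * (c \<bullet> stack D1 D2) + c \<bullet> (HW *v c)"
      using var_lemma[OF fin sphi sS m0 mD, of c] unfolding HW_def by simp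
    also have "\<dots> = var M (\<phi> \<alpha>0 0) - stack D1 D2 \<bullet> (Hi *v stack D1 D2)"
      unfolding Hc unfolding c_eq by (simp add: inner_commute)
    finally show ?thesis .
  qed
  have b11: "blk11 HW = Hmat M Sa Sa" by (simp add: vec_eq_iff blk11_def HW_def Hmat_nth S_def)
  have b12: "blk12 HW = Hmat M Sa Sg" by (simp add: vec_eq_iff blk12_def HW_def Hmat_nth S_def)
  have b21: "blk21 HW = Hmat M Sg Sa" by (simp add: vec_eq_iff blk21_def HW_def Hmat_nth S_def)
  have b22: "blk22 HW = Hmat M Sg Sg" by (simp add: vec_eq_iff blk22_def HW_def Hmat_nth S_def)
  have sSa: "sqint M (\<lambda>\<omega>. Sa \<omega> $ j)" for j using sq_Sa unfolding Sa_def .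
  have invA: "invertible (blk11 HW)"
  proof (rule invertible_ker)
    fix u assume u0: "blk11 HW *v u = 0"
    have "(\<integral>\<omega>. (u \<bullet> Sa \<omega>)\<^sup>2 \<partial>M) = 0"
      using u0 unfolding b11 G2[OF sSa, symmetric] by simp
    moreover have "integrable M (\<lambda>\<omega>. (u \<bullet> Sa \<omega>)\<^sup>2)"
      using sqint_inner[OF sSa, of u] by (simp add: sqint_def)
    ultimately have ae: "AE \<omega> in M. (u \<bullet> Sa \<omega>)\<^sup>2 = 0"
      using integral_nonneg_eq_0_iff_AE[of M "\<lambda>\<omega>. (u \<bullet> Sa \<omega>)\<^sup>2"] by simp
    have "HW *v stack u (0::real^'g) = 0"
    proof (subst vec_eq_iff, intro allI)
      fix j
      have "(HW *v stack u 0) $ j = (\<integral>\<omega>. S \<omega> $ j * (stack u 0 \<bullet> S \<omega>) \<partial>M)"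
        unfolding HW_def by (rule G1[OF sS])
      also have "\<dots> = (\<integral>\<omega>. 0 \<partial>M)"
      proof (rule integral_cong_AE)
        show "AE \<omega> in M. S \<omega> $ j * (stack u 0 \<bullet> S \<omega>) = 0"
          using ae by eventually_elim (simp add: S_def inner_stack)
      qed (use sS[of j] sqint_inner[OF sS, of "stack u 0"] in \<open>auto simp: sqint_def\<close>)
      finally show "(HW *v stack u 0) $ j = 0 $ j" by simp
    qed
    then have "stack u (0::real^'g) = 0" using inv_mv(1)[OF invHW, of "stack u 0"] by simp
    then have "stack u (0::real^'g) = stack 0 (0::real^'g)" by (simp add: stack_zero)
    then show "u = 0" unfolding stack_eq_iff by simp
  qed
  note B = block_lemma(2)[where Da=D1 and Db=D2, OF symHW invHW invA, unfolded b11 b12 b21 b22]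
  have final: "var M (\<lambda>\<omega>. \<phi> \<alpha>0 0 \<omega> - stack D1 D2 \<bullet> (matrix_inv HW *v S \<omega>))
      = var M (\<phi> \<alpha>0 0) - D1 \<bullet> (matrix_inv (Hmat M Sa Sa) *v D1)
        - (D2 - D1 v* (matrix_inv (Hmat M Sa Sa) ** Hmat M Sa Sg)) \<bullet>
          (matrix_inv (Hmat M Sg Sg - Hmat M Sg Sa ** matrix_inv (Hmat M Sa Sa) ** Hmat M Sa Sg) *v
           (D2 - D1 v* (matrix_inv (Hmat M Sa Sa) ** Hmat M Sa Sg)))"
    using eps B unfolding Hi_def by simp
  show ?thesis
    unfolding Let_def using final unfolding HW_def S_def Sa_def Sg_def \<phi>_def D1_def D2_def .
qed


end
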